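(* Let $p\in(1,\infty)$ and $\gamma>2-1/p$. For $b\ge0$ let $\mathcal{D}_\gamma=\{u\in M^{2,p}_{\gamma-2}:u_x\in L^p_\gamma\}$ and $\mathcal{L}_b:\mathcal{D}_\gamma\to L^p_\gamma$, $\mathcal{L}_b\rho=\partial_{xx}\rho-2b\tanh(x)\partial_x\rho$. Then there is a constant $C$, independent of $b\ge0$, such that for all $f$ in the range of $\mathcal{L}_b$ and all solutions $u$ of $\mathcal{L}_bu=f$, \[ \|u\|_{M^{2,p}_{\gamma-2}}\le C\|f\|_{L^p_\gamma}. \]
   Context: $\langle x\rangle=(1+x^2)^{1/2}$; $L^p_\gamma$ is the completion of $C_0^\infty(\mathbb{R})$ under $(\int|u\langle x\rangle^\gamma|^p)^{1/p}$; $M^{k,p}_\gamma$ is the completion under $\big(\sum_{\alpha\le k}\|\partial_x^\alpha u\,\langle x\rangle^{\gamma+\alpha}\|_{L^p}^p\big)^{1/p}$. *)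

theory Defs
  imports "HOL-Analysis.Analysis"
begin

definition jb :: "real \<Rightarrow> real" where
  "jb x = (1 + x\<^sup>2) powr (1/2)"

definition wLp_norm :: "real \<Rightarrow> real \<Rightarrow> (real \<Rightarrow> real) \<Rightarrow> real" where
  "wLp_norm p \<gamma> g = (\<integral>x. \<bar>g x * jb x powr \<gamma>\<bar> powr p \<partial>lborel) powr (1/p)"

text \<open>Membership in L^p_\<gamma> (for 1 \<le> p < \<infinity> the completion of C_0^\<infinity> under the weighted
  norm is the space of measurable functions with finite weighted norm).\<close>
definition in_wLp :: "real \<Rightarrow> real \<Rightarrow> (real \<Rightarrow> real) \<Rightarrow> bool" where
  "in_wLp p \<gamma> g \<longleftrightarrow> g \<in> borel_measurable lborel \<and>
     integrable lborel (\<lambda>x. \<bar>g x * jb x powr \<gamma>\<bar> powr p)"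

text \<open>A function u on the real line with derivatives u1 = u' and u2 = u'' in the
  W^{2,1}_loc sense: u is differentiable everywhere with derivative u1, and u1 is
  absolutely continuous with a.e. derivative u2 (u2 locally integrable).\<close>
definition second_derivs :: "(real \<Rightarrow> real) \<Rightarrow> (real \<Rightarrow> real) \<Rightarrow> (real \<Rightarrow> real) \<Rightarrow> bool" where
  "second_derivs u u1 u2 \<longleftrightarrow>
     (\<forall>x. (u has_real_derivative u1 x) (at x)) \<and>
     (\<forall>x y. x \<le> y \<longrightarrow> set_integrable lborel {x..y} u2 \<and>
        u1 y - u1 x = (LINT t:{x..y}|lborel. u2 t))"

definition in_M2 :: "real \<Rightarrow> real \<Rightarrow> (real \<Rightarrow> real) \<Rightarrow> (real \<Rightarrow> real) \<Rightarrow> (real \<Rightarrow> real) \<Rightarrow> bool" where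
  "in_M2 p \<gamma> u u1 u2 \<longleftrightarrow> second_derivs u u1 u2 \<and>
     in_wLp p \<gamma> u \<and> in_wLp p (\<gamma> + 1) u1 \<and> in_wLp p (\<gamma> + 2) u2"

definition M2_norm :: "real \<Rightarrow> real \<Rightarrow> (real \<Rightarrow> real) \<Rightarrow> (real \<Rightarrow> real) \<Rightarrow> (real \<Rightarrow> real) \<Rightarrow> real" where
  "M2_norm p \<gamma> u u1 u2 =
     ((\<integral>x. \<bar>u x * jb x powr \<gamma>\<bar> powr p \<partial>lborel)
      + (\<integral>x. \<bar>u1 x * jb x powr (\<gamma> + 1)\<bar> powr p \<partial>lborel)
      + (\<integral>x. \<bar>u2 x * jb x powr (\<gamma> + 2)\<bar> powr p \<partial>lborel)) powr (1/p)"

definition in_D :: "real \<Rightarrow> real \<Rightarrow> (real \<Rightarrow> real) \<Rightarrow> (real \<Rightarrow> real) \<Rightarrow> (real \<Rightarrow> real) \<Rightarrow> bool" where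
  "in_D p \<gamma> u u1 u2 \<longleftrightarrow> in_M2 p (\<gamma> - 2) u u1 u2 \<and> in_wLp p \<gamma> u1"

end

theory Submission
  imports Defs
begin


lemma young_p:
  fixes p c y :: real
  assumes p: "1 < p" and c: "0 \<le> c" and y: "0 \<le> y"
  shows "p * c powr (p-1) * y \<le> y powr p + (p-1) * c powr p"
proof -
  define q where "q = p/(p-1)"
  have q: "q > 1" "1/p + 1/q = 1" using p by (auto simp: q_def field_simps)
  have "y * c powr (p-1) \<le> y powr p / p + (c powr (p-1)) powr q / q"
    by (rule Youngs_inequality) (use p q y c in auto)
  also have "(c powr (p-1)) powr q = c powr p"
    using p by (simp add: powr_powr q_def)
  finally have "y * c powr (p-1) \<le> y powr p / p + c powr p / q" .
  then have "p * (y * c powr (p-1)) \<le> p * (y powr p / p + c powr p / q)"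
    using p by (intro mult_left_mono) auto
  also have "\<dots> = y powr p + (p-1) * c powr p" using p by (simp add: q_def field_simps)
  finally show ?thesis by (simp add: ac_simps)
qed



lemma holder_pt:
  fixes K g \<phi> :: "real \<Rightarrow> real" and p a h :: real
  assumes p: "1 < p"
  and Km[measurable]: "K \<in> borel_measurable borel" and gm[measurable]: "g \<in> borel_measurable borel"
  and \<phi>m[measurable]: "\<phi> \<in> borel_measurable borel"
  and K0: "\<And>t. 0 \<le> K t" and g0: "\<And>t. 0 \<le> g t" and \<phi>0: "\<And>t. 0 < \<phi> t"
  and a0: "0 < a" and h0: "0 \<le> h"
  and rows: "(\<integral>\<^sup>+t. ennreal (K t * \<phi> t) \<partial>lborel) \<le> ennreal a"
  and hK: "ennreal h \<le> (\<integral>\<^sup>+t. ennreal (K t * g t) \<partial>lborel)"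
  shows "ennreal (h powr p) \<le> ennreal (a powr (p-1)) *
           (\<integral>\<^sup>+t. ennreal (K t * g t powr p * \<phi> t powr (1-p)) \<partial>lborel)"
proof -
  define I where "I = (\<integral>\<^sup>+t. ennreal (K t * g t powr p * \<phi> t powr (1-p)) \<partial>lborel)"
  define G where "G = (\<integral>\<^sup>+t. ennreal (K t * g t) \<partial>lborel)"
  have young: "ennreal (p * c powr (p-1)) * G \<le> I + ennreal ((p-1) * c powr p) * ennreal a"
    if c: "0 < c" for c
  proof -
    have pt: "p * c powr (p-1) * (K t * g t) \<le> K t * g t powr p * \<phi> t powr (1-p) + (p-1) * c powr p * (K t * \<phi> t)" for t
    proof -
      have y: "p * c powr (p-1) * (g t / \<phi> t) \<le> (g t / \<phi> t) powr p + (p-1) * c powr p"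
        by (rule young_p) (use p c g0[of t] \<phi>0[of t] in \<open>auto intro: less_imp_le\<close>)
      have "p * c powr (p-1) * (K t * g t) = (K t * \<phi> t) * (p * c powr (p-1) * (g t / \<phi> t))"
        using \<phi>0[of t] by (simp add: field_simps)
      also have "\<dots> \<le> (K t * \<phi> t) * ((g t / \<phi> t) powr p + (p-1) * c powr p)"
        by (intro mult_left_mono y) (use K0[of t] \<phi>0[of t] in \<open>auto intro: less_imp_le\<close>)
      also have "(g t / \<phi> t) powr p = g t powr p * \<phi> t powr (-p)"
        using g0[of t] \<phi>0[of t] by (simp add: powr_divide powr_minus_divide)
      also have "\<phi> t * \<phi> t powr (-p) = \<phi> t powr (1-p)"
        using \<phi>0[of t] by (simp add: powr_diff powr_minus_divide)
      then have "(K t * \<phi> t) * (g t powr p * \<phi> t powr (-p) + (p-1) * c powr p)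
           = K t * g t powr p * \<phi> t powr (1-p) + (p-1) * c powr p * (K t * \<phi> t)"
        by (simp add: algebra_simps)
      finally show ?thesis .
    qed
    have "ennreal (p * c powr (p-1)) * G = (\<integral>\<^sup>+t. ennreal (p * c powr (p-1) * (K t * g t)) \<partial>lborel)"
      unfolding G_def using p c K0 g0
      by (subst nn_integral_cmult[symmetric]) (auto simp: ennreal_mult[symmetric] intro!: nn_integral_cong)
    also have "\<dots> \<le> (\<integral>\<^sup>+t. ennreal (K t * g t powr p * \<phi> t powr (1-p)) + ennreal ((p-1) * c powr p) * ennreal (K t * \<phi> t) \<partial>lborel)"
    proof (intro nn_integral_mono)
      fix t
      have n1: "0 \<le> K t * g t powr p * \<phi> t powr (1-p)" using K0[of t] by simp
      have n2: "0 \<le> (p-1) * c powr p" using p by simp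
      have n3: "0 \<le> K t * \<phi> t" using K0[of t] \<phi>0[of t] by simp
      have "ennreal (K t * g t powr p * \<phi> t powr (1-p)) + ennreal ((p-1) * c powr p) * ennreal (K t * \<phi> t)
          = ennreal (K t * g t powr p * \<phi> t powr (1-p) + (p-1) * c powr p * (K t * \<phi> t))"
        using n1 n2 n3 by (simp add: ennreal_mult[symmetric] ennreal_plus)
      then show "ennreal (p * c powr (p-1) * (K t * g t)) \<le> ennreal (K t * g t powr p * \<phi> t powr (1-p)) + ennreal ((p-1) * c powr p) * ennreal (K t * \<phi> t)"
        using pt[of t] by (simp add: ennreal_leI)
    qed
    also have "\<dots> = I + ennreal ((p-1) * c powr p) * (\<integral>\<^sup>+t. ennreal (K t * \<phi> t) \<partial>lborel)"
      unfolding I_def using Km gm \<phi>m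
      by (subst nn_integral_add) (auto simp: nn_integral_cmult)
    also have "\<dots> \<le> I + ennreal ((p-1) * c powr p) * ennreal a"
      by (intro add_left_mono mult_left_mono rows) auto
    finally show ?thesis .
  qed
  show ?thesis
  proof (cases "I = \<infinity>")
    case True
    then show ?thesis using a0 unfolding I_def[symmetric] by (simp add: ennreal_mult_top)
  next
    case False
    then obtain Ir where Ir: "I = ennreal Ir" "0 \<le> Ir" by (cases I) auto
    have y1: "ennreal p * G \<le> ennreal (Ir + (p-1) * a)"
      using young[of 1] Ir p a0 by (simp add: ennreal_plus ennreal_mult'')
    have "G \<noteq> \<infinity>"
    proof
      assume "G = \<infinity>" then show False using y1 p by (simp add: ennreal_mult_top top_unique)
    qed
    then obtain Gr where Gr: "G = ennreal Gr" "0 \<le> Gr" by (cases G) auto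
    have hG: "h \<le> Gr" using hK Gr h0 unfolding G_def[symmetric] by (simp add: ennreal_le_iff)
    show ?thesis
    proof (cases "h = 0")
      case True then show ?thesis using p by simp
    next
      case False
      define c where "c = h / a"
      have c0: "0 < c" using False h0 a0 by (simp add: c_def)
      have e1: "ennreal (p * c powr (p-1)) * G = ennreal (p * c powr (p-1) * Gr)"
        using Gr p by (simp add: ennreal_mult)
      have e2: "I + ennreal ((p-1) * c powr p) * ennreal a = ennreal (Ir + (p-1) * c powr p * a)"
        using Ir p a0 by (simp add: ennreal_plus ennreal_mult mult.assoc)
      have "ennreal (p * c powr (p-1) * Gr) \<le> ennreal (Ir + (p-1) * c powr p * a)"
        using young[OF c0] unfolding e1 e2 .
      then have "p * c powr (p-1) * Gr \<le> Ir + (p-1) * c powr p * a"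
        using Ir p c0 a0 by (subst (asm) ennreal_le_iff) auto
      moreover have "p * c powr (p-1) * h \<le> p * c powr (p-1) * Gr"
        using hG p c0 by (intro mult_left_mono) auto
      moreover have "c powr (p-1) * h = h powr p / a powr (p-1)"
        using False h0 a0 by (simp add: c_def powr_divide powr_diff field_simps)
      moreover have "c powr p * a = h powr p / a powr (p-1)"
        using False h0 a0 by (simp add: c_def powr_divide powr_diff field_simps)
      ultimately have "p * (h powr p / a powr (p-1)) \<le> Ir + (p-1) * (h powr p / a powr (p-1))"
        by (simp add: mult.assoc)
      moreover obtain X where X: "X = h powr p / a powr (p-1)" by blast
      ultimately have "p * X \<le> Ir + (p-1) * X" by simp
      then have "X \<le> Ir" by (simp add: left_diff_distrib)
      then have "h powr p / a powr (p-1) \<le> Ir" using X by simp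
      then have "h powr p \<le> a powr (p-1) * Ir" using a0 by (simp add: divide_le_eq mult.commute)
      then show ?thesis unfolding I_def[symmetric] using Ir a0
        by (simp add: ennreal_mult''[symmetric])
    qed
  qed
qed



lemma schur:
  fixes K :: "real \<Rightarrow> real \<Rightarrow> real" and g \<phi> a h :: "real \<Rightarrow> real" and p \<beta> :: real
  assumes p: "1 < p" and \<beta>: "0 \<le> \<beta>"
  and Km[measurable]: "(\<lambda>(x,t). K x t) \<in> borel_measurable borel"
  and gm[measurable]: "g \<in> borel_measurable borel"
  and \<phi>m[measurable]: "\<phi> \<in> borel_measurable borel"
  and am[measurable]: "a \<in> borel_measurable borel"
  and K0: "\<And>x t. 0 \<le> K x t" and g0: "\<And>t. 0 \<le> g t" and \<phi>0: "\<And>t. 0 < \<phi> t"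
  and a0: "\<And>x. 0 < a x" and h0: "\<And>x. 0 \<le> h x"
  and rows: "\<And>x. (\<integral>\<^sup>+t. ennreal (K x t * \<phi> t) \<partial>lborel) \<le> ennreal (a x)"
  and cols: "\<And>t. (\<integral>\<^sup>+x. ennreal (a x powr (p-1) * K x t) \<partial>lborel) \<le> ennreal (\<beta> * \<phi> t powr (p-1))"
  and hK: "\<And>x. ennreal (h x) \<le> (\<integral>\<^sup>+t. ennreal (K x t * g t) \<partial>lborel)"
  shows "(\<integral>\<^sup>+x. ennreal (h x powr p) \<partial>lborel) \<le> ennreal \<beta> * (\<integral>\<^sup>+t. ennreal (g t powr p) \<partial>lborel)"
proof -
  have Kx[measurable]: "K x \<in> borel_measurable borel" for x
  proof -
    have "(\<lambda>t. (\<lambda>(x,t). K x t) (x, t)) \<in> borel_measurable borel"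
      by (rule measurable_compose[OF _ Km]) (intro borel_measurable_continuous_onI continuous_intros)
    then show ?thesis by simp
  qed
  have Kt[measurable]: "(\<lambda>x. K x t) \<in> borel_measurable borel" for t
  proof -
    have "(\<lambda>x. (\<lambda>(x,t). K x t) (x, t)) \<in> borel_measurable borel"
      by (rule measurable_compose[OF _ Km]) (intro borel_measurable_continuous_onI continuous_intros)
    then show ?thesis by simp
  qed
  have Km2[measurable]: "(\<lambda>z. K (fst z) (snd z)) \<in> borel_measurable (borel \<Otimes>\<^sub>M borel)"
    using Km by (simp add: case_prod_beta' borel_prod)
  have M: "(\<lambda>z. ennreal (a (fst z) powr (p-1) * K (fst z) (snd z) * (g (snd z) powr p * \<phi> (snd z) powr (1-p)))) \<in> borel_measurable (borel \<Otimes>\<^sub>M borel)"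
    by measurable
  have "(\<integral>\<^sup>+x. ennreal (h x powr p) \<partial>lborel) \<le>
        (\<integral>\<^sup>+x. ennreal (a x powr (p-1)) * (\<integral>\<^sup>+t. ennreal (K x t * g t powr p * \<phi> t powr (1-p)) \<partial>lborel) \<partial>lborel)"
    by (intro nn_integral_mono holder_pt[OF p] K0 g0 \<phi>0 a0 h0 rows hK) auto
  also have "\<dots> = (\<integral>\<^sup>+x. (\<integral>\<^sup>+t. ennreal (a x powr (p-1) * K x t * (g t powr p * \<phi> t powr (1-p))) \<partial>lborel) \<partial>lborel)"
    using K0 by (subst nn_integral_cmult[symmetric]) (auto simp: ennreal_mult[symmetric] ac_simps intro!: nn_integral_cong)
  also have "\<dots> = (\<integral>\<^sup>+t. (\<integral>\<^sup>+x. ennreal (a x powr (p-1) * K x t * (g t powr p * \<phi> t powr (1-p))) \<partial>lborel) \<partial>lborel)"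
    by (rule lborel_pair.Fubini'[symmetric]) (use M in \<open>simp add: lborel_prod measurable_lborel1 borel_prod case_prod_beta'\<close>)
  also have "\<dots> = (\<integral>\<^sup>+t. ennreal (g t powr p * \<phi> t powr (1-p)) * (\<integral>\<^sup>+x. ennreal (a x powr (p-1) * K x t) \<partial>lborel) \<partial>lborel)"
    using K0 by (subst nn_integral_cmult[symmetric]) (auto simp: ennreal_mult[symmetric] ac_simps intro!: nn_integral_cong)
  also have "\<dots> \<le> (\<integral>\<^sup>+t. ennreal (g t powr p * \<phi> t powr (1-p)) * ennreal (\<beta> * \<phi> t powr (p-1)) \<partial>lborel)"
    by (intro nn_integral_mono mult_left_mono cols) auto
  also have "\<dots> = (\<integral>\<^sup>+t. ennreal \<beta> * ennreal (g t powr p) \<partial>lborel)"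
  proof (intro nn_integral_cong)
    fix t
    have "\<phi> t powr (1-p) * \<phi> t powr (p-1) = 1" using \<phi>0[of t] by (simp add: powr_add[symmetric])
    then have "g t powr p * \<phi> t powr (1-p) * (\<beta> * \<phi> t powr (p-1)) = \<beta> * g t powr p"
      by (simp add: algebra_simps)
    then show "ennreal (g t powr p * \<phi> t powr (1-p)) * ennreal (\<beta> * \<phi> t powr (p-1)) = ennreal \<beta> * ennreal (g t powr p)"
      using \<beta> by (simp add: ennreal_mult[symmetric])
  qed
  also have "\<dots> = ennreal \<beta> * (\<integral>\<^sup>+t. ennreal (g t powr p) \<partial>lborel)"
    by (rule nn_integral_cmult) auto
  finally show ?thesis .
qed



lemma tail_int:
  fixes x c :: real
  assumes x: "0 \<le> x" and c: "0 < c"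
  shows "(\<integral>\<^sup>+t. ennreal ((1+t) powr (-c-1)) * indicator {x..} t \<partial>lborel) = ennreal ((1+x) powr (-c) / c)"
proof -
  have lim: "((\<lambda>t. - ((1+t) powr (-c) / c)) \<longlongrightarrow> -(0/c)) at_top"
    by (intro tendsto_minus tendsto_divide tendsto_const tendsto_neg_powr filterlim_tendsto_add_at_top[OF tendsto_const filterlim_ident]) (use c in auto)
  have "(\<integral>\<^sup>+t. ennreal ((1+t) powr (-c-1)) * indicator {x..} t \<partial>lborel) = ennreal (-(0/c) - (- ((1+x) powr (-c) / c)))"
  proof (rule nn_integral_FTC_atLeast[OF _ _ _ lim])
    fix t assume t: "x \<le> t"
    then have "1 + t > 0" using x by simp
    then show "DERIV (\<lambda>t. - ((1+t) powr (-c) / c)) t :> (1+t) powr (-c-1)"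
      using c by (auto intro!: derivative_eq_intros simp: field_simps)
  qed auto
  then show ?thesis by simp
qed

lemma head_int:
  fixes t e :: real
  assumes t: "0 \<le> t" and e: "0 < e"
  shows "(\<integral>\<^sup>+x. ennreal ((1+x) powr (e-1)) * indicator {0..t} x \<partial>lborel) \<le> ennreal ((1+t) powr e / e)"
proof -
  have "(\<integral>\<^sup>+x. ennreal ((1+x) powr (e-1)) * indicator {0..t} x \<partial>lborel) = ennreal ((1+t) powr e / e - (1+0) powr e / e)"
  proof (rule nn_integral_FTC_Icc)
    fix x :: real assume "x \<in> {0..t}"
    then have "1 + x > 0" by simp
    then show "DERIV (\<lambda>x. (1+x) powr e / e) x :> (1+x) powr (e-1)"
      using e by (auto intro!: derivative_eq_intros simp: field_simps)
  qed (use t in auto)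
  also have "\<dots> \<le> ennreal ((1+t) powr e / e)" using e by (intro ennreal_leI) auto
  finally show ?thesis .
qed



lemma hardy:
  fixes p a :: real and g h :: "real \<Rightarrow> real"
  assumes p: "1 < p" and a: "a > -1/p"
  and gm[measurable]: "g \<in> borel_measurable borel" and g0: "\<And>t. 0 \<le> g t" and h0: "\<And>x. 0 \<le> h x"
  and hK: "\<And>x. 0 \<le> x \<Longrightarrow> ennreal (h x) \<le>
      (\<integral>\<^sup>+t. ennreal (if x \<le> t then (1+x) powr a * (1+t) powr (-a-1) * g t else 0) \<partial>lborel)"
  shows "(\<integral>\<^sup>+x. ennreal (indicator {0..} x * h x powr p) \<partial>lborel) \<le>
     ennreal (((a + (-a + (a+1)/(p-1))/2) powr (1-p)) / (a + 1 - ((-a + (a+1)/(p-1))/2) * (p-1))) *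
     (\<integral>\<^sup>+t. ennreal (indicator {0..} t * g t powr p) \<partial>lborel)"
proof -
  define s where "s = (-a + (a+1)/(p-1))/2"
  define d where "d = a + s"
  define e where "e = a + 1 - s * (p-1)"
  have ap: "-a*(p-1) < a + 1"
  proof -
    have "-1 < a * p" using a p by (simp add: field_simps)
    then show ?thesis by (simp add: algebra_simps)
  qed
  have "-a < (a+1)/(p-1)" using ap p by (simp add: field_simps)
  moreover obtain Q where Q: "Q = (a+1)/(p-1)" by blast
  ultimately have "-a < Q" by simp
  then have sd: "-a < s" "s < (a+1)/(p-1)" unfolding s_def Q[symmetric] by auto
  have d0: "0 < d" using sd by (simp add: d_def)
  have e0: "0 < e" using sd p by (simp add: e_def field_simps)
  define \<beta> where "\<beta> = d powr (1-p) / e"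
  define \<phi> where "\<phi> = (\<lambda>t::real. (1 + \<bar>t\<bar>) powr (-s))"
  define aS where "aS = (\<lambda>x::real. (1 + \<bar>x\<bar>) powr (-s) / d)"
  define K where "K = (\<lambda>x t::real. if 0 \<le> x \<and> x \<le> t then (1+x) powr a * (1+t) powr (-a-1) else 0)"
  define g' where "g' = (\<lambda>t. indicator {0..} t * g t)"
  define h' where "h' = (\<lambda>x. indicator {0..} x * h x)"
  have "(\<integral>\<^sup>+x. ennreal (h' x powr p) \<partial>lborel) \<le> ennreal \<beta> * (\<integral>\<^sup>+t. ennreal (g' t powr p) \<partial>lborel)"
  proof (rule schur[OF p])
    show "0 \<le> \<beta>" using d0 e0 by (simp add: \<beta>_def)
    have "(\<lambda>z. K (fst z) (snd z)) \<in> borel_measurable (borel \<Otimes>\<^sub>M borel)"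
      unfolding K_def by measurable
    then show "(\<lambda>(x,t). K x t) \<in> borel_measurable borel" by (simp add: borel_prod case_prod_beta')
    show "g' \<in> borel_measurable borel" unfolding g'_def by measurable
    show "\<phi> \<in> borel_measurable borel" unfolding \<phi>_def by measurable
    show "aS \<in> borel_measurable borel" unfolding aS_def by measurable
    show "\<And>x t. 0 \<le> K x t" unfolding K_def by auto
    show "\<And>t. 0 \<le> g' t" unfolding g'_def using g0 by auto
    show "\<And>t. 0 < \<phi> t" unfolding \<phi>_def by auto
    show "\<And>x. 0 < aS x" unfolding aS_def using d0 by auto
    show "\<And>x. 0 \<le> h' x" unfolding h'_def using h0 by auto
  next
    fix x :: real
    show "(\<integral>\<^sup>+t. ennreal (K x t * \<phi> t) \<partial>lborel) \<le> ennreal (aS x)"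
    proof (cases "0 \<le> x")
      case True
      have "(\<integral>\<^sup>+t. ennreal (K x t * \<phi> t) \<partial>lborel) =
            (\<integral>\<^sup>+t. ennreal ((1+x) powr a) * (ennreal ((1+t) powr (-d-1)) * indicator {x..} t) \<partial>lborel)"
      proof (intro nn_integral_cong)
        fix t :: real
        show "ennreal (K x t * \<phi> t) = ennreal ((1+x) powr a) * (ennreal ((1+t) powr (-d-1)) * indicator {x..} t)"
        proof (cases "x \<le> t")
          case True
          then have t0: "1 + t > 0" "\<bar>t\<bar> = t" using \<open>0 \<le> x\<close> by auto
          have "(1+t) powr (-a-1) * (1+t) powr (-s) = (1+t) powr (-d-1)"
            unfolding d_def by (simp add: powr_add[symmetric] algebra_simps)
          then show ?thesis using True \<open>0 \<le> x\<close> t0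
            by (simp add: K_def \<phi>_def ennreal_mult[symmetric] mult.assoc)
        qed (simp add: K_def)
      qed
      also have "\<dots> = ennreal ((1+x) powr a) * ennreal ((1+x) powr (-d) / d)"
        by (subst nn_integral_cmult) (use tail_int[OF True d0] in auto)
      also have "\<dots> = ennreal (aS x)"
      proof -
        have "(1+x) powr a * ((1+x) powr (-d) / d) = aS x"
          using True unfolding aS_def d_def by (simp add: powr_add[symmetric])
        then show ?thesis using True d0 by (simp add: ennreal_mult[symmetric])
      qed
      finally show ?thesis by simp
    next
      case False
      then have "(\<lambda>t. ennreal (K x t * \<phi> t)) = (\<lambda>t. 0)" by (simp add: K_def fun_eq_iff)
      then show ?thesis by simp
    qed
  next
    fix t :: real
    show "(\<integral>\<^sup>+x. ennreal (aS x powr (p-1) * K x t) \<partial>lborel) \<le> ennreal (\<beta> * \<phi> t powr (p-1))"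
    proof (cases "0 \<le> t")
      case True
      have "(\<integral>\<^sup>+x. ennreal (aS x powr (p-1) * K x t) \<partial>lborel) =
            (\<integral>\<^sup>+x. ennreal (d powr (1-p) * (1+t) powr (-a-1)) * (ennreal ((1+x) powr (e-1)) * indicator {0..t} x) \<partial>lborel)"
      proof (intro nn_integral_cong)
        fix x :: real
        show "ennreal (aS x powr (p-1) * K x t) = ennreal (d powr (1-p) * (1+t) powr (-a-1)) * (ennreal ((1+x) powr (e-1)) * indicator {0..t} x)"
        proof (cases "0 \<le> x \<and> x \<le> t")
          case True
          then have x0: "1 + x > 0" "\<bar>x\<bar> = x" by auto
          have dd: "d powr (1-p) = 1 / d powr (p-1)"
            using powr_minus_divide[of d "p-1"] by simp
          have "aS x powr (p-1) = ((1+x) powr (-s)) powr (p-1) / d powr (p-1)"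
            using x0 d0 unfolding aS_def by (simp add: powr_divide)
          also have "\<dots> = (1+x) powr (-s*(p-1)) * d powr (1-p)"
            unfolding dd by (simp add: powr_powr)
          finally have "aS x powr (p-1) = (1+x) powr (-s*(p-1)) * d powr (1-p)" .
          moreover have "(1+x) powr (-s*(p-1)) * (1+x) powr a = (1+x) powr (e-1)"
            unfolding e_def by (simp add: powr_add[symmetric] algebra_simps)
          ultimately have "aS x powr (p-1) * K x t = d powr (1-p) * (1+t) powr (-a-1) * (1+x) powr (e-1)"
            using True unfolding K_def by (simp add: algebra_simps)
          then show ?thesis using True by (simp add: ennreal_mult[symmetric])
        qed (auto simp: K_def)
      qed
      also have "\<dots> \<le> ennreal (d powr (1-p) * (1+t) powr (-a-1)) * ennreal ((1+t) powr e / e)"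
        by (subst nn_integral_cmult) (use head_int[OF True e0] in \<open>auto intro: mult_left_mono\<close>)
      also have "\<dots> = ennreal (\<beta> * \<phi> t powr (p-1))"
      proof -
        have "(1+t) powr (-a-1) * (1+t) powr e = (1+t) powr (-s*(p-1))"
          unfolding e_def by (simp add: powr_add[symmetric] algebra_simps)
        moreover have "\<phi> t powr (p-1) = (1+t) powr (-s*(p-1))"
          using True unfolding \<phi>_def by (simp add: powr_powr)
        ultimately have "d powr (1-p) * (1+t) powr (-a-1) * ((1+t) powr e / e) = \<beta> * \<phi> t powr (p-1)"
          unfolding \<beta>_def by (simp add: field_simps)
        then show ?thesis using e0 by (simp add: ennreal_mult[symmetric])
      qed
      finally show ?thesis .
    next
      case False
      then have "(\<lambda>x. ennreal (aS x powr (p-1) * K x t)) = (\<lambda>x. 0)" by (simp add: K_def fun_eq_iff)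
      then show ?thesis by simp
    qed
  next
    fix x :: real
    show "ennreal (h' x) \<le> (\<integral>\<^sup>+t. ennreal (K x t * g' t) \<partial>lborel)"
    proof (cases "0 \<le> x")
      case True
      have "(\<integral>\<^sup>+t. ennreal (K x t * g' t) \<partial>lborel) =
           (\<integral>\<^sup>+t. ennreal (if x \<le> t then (1+x) powr a * (1+t) powr (-a-1) * g t else 0) \<partial>lborel)"
        using True by (intro nn_integral_cong) (auto simp: K_def g'_def)
      then show ?thesis using hK[OF True] True by (simp add: h'_def)
    qed (simp add: h'_def)
  qed
  moreover have "\<And>x. h' x powr p = indicator {0..} x * h x powr p"
    unfolding h'_def using p by (auto simp: indicator_def)
  moreover have "\<And>t. g' t powr p = indicator {0..} t * g t powr p"
    unfolding g'_def using p by (auto simp: indicator_def)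
  ultimately show ?thesis unfolding \<beta>_def d_def e_def s_def by simp
qed



lemma jb_sqrt: "jb x = sqrt (1 + x\<^sup>2)"
  unfolding jb_def by (simp add: powr_half_sqrt add_nonneg_nonneg)

lemma jb_ge1: "1 \<le> jb x" unfolding jb_sqrt by simp
lemma jb_pos: "0 < jb x" using jb_ge1[of x] by simp
lemma jb_minus[simp]: "jb (-x) = jb x" unfolding jb_sqrt by simp
lemma jb_cont: "continuous_on A jb" unfolding jb_sqrt by (intro continuous_intros)
lemma jb_meas[measurable]: "jb \<in> borel_measurable borel"
  by (intro borel_measurable_continuous_onI jb_cont)

lemma jb_le: "0 \<le> x \<Longrightarrow> jb x \<le> 1 + x"
  unfolding jb_sqrt by (rule real_le_lsqrt) (auto simp: power2_eq_square algebra_simps)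

lemma jb_ge: "0 \<le> x \<Longrightarrow> 1 + x \<le> sqrt 2 * jb x"
proof -
  assume x: "0 \<le> x"
  have "0 \<le> (x-1)\<^sup>2" by simp
  then have "(1+x)\<^sup>2 \<le> 2 * (1 + x\<^sup>2)" by (simp add: power2_eq_square algebra_simps)
  then have "1 + x \<le> sqrt (2 * (1 + x\<^sup>2))" using x by (intro real_le_rsqrt) auto
  then show ?thesis unfolding jb_sqrt real_sqrt_mult .
qed

lemma jb_mono: "0 \<le> x \<Longrightarrow> x \<le> y \<Longrightarrow> jb x \<le> jb y"
  unfolding jb_sqrt by (simp add: power_mono)

lemma sqrt2_powr: "sqrt 2 powr e = 2 powr (e/2)"
  by (simp add: powr_half_sqrt[symmetric] powr_powr)

lemma le_two_powr: "0 \<le> X \<Longrightarrow> X \<le> 2 powr (\<bar>e\<bar>/2) * (X::real)"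
proof -
  assume X: "0 \<le> X"
  have "1 \<le> 2 powr (\<bar>e\<bar>/2)" by (rule ge_one_powr_ge_zero) auto
  from mult_right_mono[OF this X] show ?thesis by simp
qed

lemma w_le_rho: assumes x: "0 \<le> x" shows "jb x powr e \<le> 2 powr (\<bar>e\<bar>/2) * (1+x) powr e"
proof (cases "0 \<le> e")
  case True
  have "jb x powr e \<le> (1+x) powr e" using True jb_le[OF x] jb_pos[of x] by (intro powr_mono2) auto
  also have "\<dots> \<le> 2 powr (\<bar>e\<bar>/2) * (1+x) powr e"
    using x by (intro le_two_powr) auto
  finally show ?thesis .
next
  case False
  have "jb x powr e \<le> ((1+x)/sqrt 2) powr e"
    using False jb_ge[OF x] x by (intro powr_mono2') (auto simp: field_simps)
  also have "\<dots> = 2 powr (\<bar>e\<bar>/2) * (1+x) powr e"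
    using False x by (simp add: powr_divide sqrt2_powr powr_minus_divide[symmetric] field_simps)
      (simp add: powr_minus_divide)
  finally show ?thesis .
qed

lemma rho_le_w: assumes x: "0 \<le> x" shows "(1+x) powr e \<le> 2 powr (\<bar>e\<bar>/2) * jb x powr e"
proof (cases "0 \<le> e")
  case True
  have "(1+x) powr e \<le> (sqrt 2 * jb x) powr e" using True jb_ge[OF x] x by (intro powr_mono2) auto
  also have "\<dots> = 2 powr (\<bar>e\<bar>/2) * jb x powr e"
    using True by (simp add: powr_mult sqrt2_powr)
  finally show ?thesis .
next
  case False
  have "(1+x) powr e \<le> jb x powr e"
    using False jb_le[OF x] jb_pos[of x] by (intro powr_mono2') auto
  also have "\<dots> \<le> 2 powr (\<bar>e\<bar>/2) * jb x powr e"
    by (intro le_two_powr) auto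
  finally show ?thesis .
qed

lemma nn_reflect_le:
  fixes f :: "real \<Rightarrow> ennreal"
  assumes [measurable]: "f \<in> borel_measurable borel"
  shows "(\<integral>\<^sup>+x. f x \<partial>lborel) \<le> (\<integral>\<^sup>+x. f x * indicator {0..} x \<partial>lborel) + (\<integral>\<^sup>+x. f (-x) * indicator {0..} x \<partial>lborel)"
proof -
  have "(\<integral>\<^sup>+x. f x \<partial>lborel) \<le> (\<integral>\<^sup>+x. f x * indicator {0..} x + f x * indicator {..0} x \<partial>lborel)"
    by (intro nn_integral_mono) (auto simp: indicator_def)
  also have "\<dots> = (\<integral>\<^sup>+x. f x * indicator {0..} x \<partial>lborel) + (\<integral>\<^sup>+x. f x * indicator {..0} x \<partial>lborel)"
    by (rule nn_integral_add) auto
  also have "(\<integral>\<^sup>+x. f x * indicator {..0} x \<partial>lborel) = (\<integral>\<^sup>+x. f (-x) * indicator {0..} x \<partial>lborel)"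
    by (subst nn_integral_real_affine[where c="-1" and t=0]) (auto simp: indicator_def intro!: nn_integral_cong)
  finally show ?thesis .
qed

lemma jb_int:
  assumes c: "1 < c"
  shows "integrable lborel (\<lambda>x. jb x powr (-c))"
proof -
  have pos: "(\<integral>\<^sup>+x. ennreal (jb x powr (-c)) * indicator {0..} x \<partial>lborel) < \<infinity>"
  proof -
    have "(\<integral>\<^sup>+x. ennreal (jb x powr (-c)) * indicator {0..} x \<partial>lborel) \<le>
          (\<integral>\<^sup>+x. ennreal (2 powr (c/2)) * (ennreal ((1+x) powr (-(c-1)-1)) * indicator {0..} x) \<partial>lborel)"
    proof (intro nn_integral_mono)
      fix x :: real
      show "ennreal (jb x powr (-c)) * indicator {0..} x \<le> ennreal (2 powr (c/2)) * (ennreal ((1+x) powr (-(c-1)-1)) * indicator {0..} x)"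
      proof (cases "0 \<le> x")
        case True
        then show ?thesis using w_le_rho[OF True, of "-c"] c
          by (auto simp: ennreal_mult[symmetric] intro!: ennreal_leI)
      qed auto
    qed
    also have "\<dots> = ennreal (2 powr (c/2)) * ennreal ((1+0) powr (-(c-1)) / (c-1))"
    proof -
      have T: "(\<integral>\<^sup>+x. ennreal ((1+x) powr (-c)) * indicator {0..} x \<partial>lborel) = ennreal (1 / (c-1))"
        using tail_int[of 0 "c-1"] c by simp
      show ?thesis by (subst nn_integral_cmult) (auto simp: T)
    qed
    finally show ?thesis by (rule le_less_trans) (simp add: ennreal_mult_less_top)
  qed
  have "(\<integral>\<^sup>+x. ennreal (norm (jb x powr (-c))) \<partial>lborel) \<le>
       (\<integral>\<^sup>+x. ennreal (jb x powr (-c)) * indicator {0..} x \<partial>lborel) + (\<integral>\<^sup>+x. ennreal (jb (-x) powr (-c)) * indicator {0..} x \<partial>lborel)"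
    using nn_reflect_le[of "\<lambda>x. ennreal (jb x powr (-c))"] by simp
  also have "\<dots> < \<infinity>" using pos by simp
  finally show ?thesis by (subst integrable_iff_bounded) auto
qed

lemma wLp_L1:
  fixes p e :: real and g :: "real \<Rightarrow> real"
  assumes p: "1 < p" and e: "1 - 1/p < e" and g: "in_wLp p e g"
  shows "integrable lborel g"
proof -
  define q where "q = p/(p-1)"
  have q: "q > 1" "1/p + 1/q = 1" using p by (auto simp: q_def field_simps)
  have eq: "e * q > 1"
  proof -
    have "e * p > p - 1" using e p by (simp add: field_simps)
    then show ?thesis using p by (simp add: q_def field_simps)
  qed
  have gm[measurable]: "g \<in> borel_measurable lborel" using g by (simp add: in_wLp_def)
  have bnd: "norm (g x) \<le> \<bar>g x * jb x powr e\<bar> powr p / p + jb x powr (-(e*q)) / q" for x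
  proof -
    have "\<bar>g x\<bar> = \<bar>g x * jb x powr e\<bar> * jb x powr (-e)"
      using jb_pos[of x] by (simp add: abs_mult powr_minus field_simps)
    also have "\<dots> \<le> \<bar>g x * jb x powr e\<bar> powr p / p + (jb x powr (-e)) powr q / q"
      by (rule Youngs_inequality) (use p q in auto)
    also have "(jb x powr (-e)) powr q = jb x powr (-(e*q))" by (simp add: powr_powr)
    finally show ?thesis by simp
  qed
  show ?thesis
  proof (rule Bochner_Integration.integrable_bound)
    show "integrable lborel (\<lambda>x. \<bar>g x * jb x powr e\<bar> powr p / p + jb x powr (-(e*q)) / q)"
      using g jb_int[OF eq] unfolding in_wLp_def by (intro Bochner_Integration.integrable_add integrable_divide_zero) auto
    show "AE x in lborel. norm (g x) \<le> norm (\<bar>g x * jb x powr e\<bar> powr p / p + jb x powr (-(e*q)) / q)"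
    proof (rule AE_I2)
      fix x
      have "0 \<le> \<bar>g x * jb x powr e\<bar> powr p / p + jb x powr (-(e*q)) / q" using p q by auto
      then show "norm (g x) \<le> norm (\<bar>g x * jb x powr e\<bar> powr p / p + jb x powr (-(e*q)) / q)"
        using bnd[of x] by (metis abs_of_nonneg real_norm_def)
    qed
  qed simp
qed



lemma ibp:
  fixes g hh h' :: "real \<Rightarrow> real" and x y B :: real
  assumes xy: "x \<le> y"
  and gi: "integrable lborel (\<lambda>t. indicator {x..y} t * g t)"
  and hd: "\<And>s. DERIV hh s :> h' s" and hc: "\<And>s. isCont h' s" and hb: "\<And>s. \<bar>h' s\<bar> \<le> B"
  shows "(\<integral>t. indicator {x..y} t * (hh t * g t) \<partial>lborel) =
     hh y * (\<integral>t. indicator {x..y} t * g t \<partial>lborel) -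
     (\<integral>s. indicator {x..y} s * (h' s * (\<integral>t. indicator {x..s} t * g t \<partial>lborel)) \<partial>lborel)"
proof -
  define G where "G = (\<lambda>t. indicator {x..y} t * g t)"
  have Gm[measurable]: "G \<in> borel_measurable borel" using borel_measurable_integrable[OF gi] unfolding G_def
    by simp
  have h'm[measurable]: "h' \<in> borel_measurable borel"
    by (intro borel_measurable_continuous_onI continuous_at_imp_continuous_on) (auto intro: hc)
  define F where "F = (\<lambda>t s. G t * ((if t \<le> s \<and> s \<le> y then 1 else 0) * h' s))"
  have Fm: "(\<lambda>z. F (fst z) (snd z)) \<in> borel_measurable (borel \<Otimes>\<^sub>M borel)"
    unfolding F_def by measurable
  have Fm': "case_prod F \<in> borel_measurable (lborel \<Otimes>\<^sub>M lborel)"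
    using Fm by (simp add: lborel_prod measurable_lborel1 borel_prod case_prod_beta')
  have B0: "0 \<le> B" using hb[of 0] by simp
  have Fint: "integrable (lborel \<Otimes>\<^sub>M lborel) (case_prod F)"
  proof (subst integrable_iff_bounded, intro conjI Fm')
    have "(\<integral>\<^sup>+z. ennreal (norm (case_prod F z)) \<partial>(lborel \<Otimes>\<^sub>M lborel)) =
          (\<integral>\<^sup>+t. \<integral>\<^sup>+s. ennreal (norm (F t s)) \<partial>lborel \<partial>lborel)"
      using Fm' by (subst lborel.nn_integral_fst[symmetric]) auto
    also have "\<dots> \<le> (\<integral>\<^sup>+t. \<integral>\<^sup>+s. ennreal (norm (G t) * B) * indicator {x..y} s \<partial>lborel \<partial>lborel)"
    proof (intro nn_integral_mono)
      fix t s :: real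
      have "norm (F t s) \<le> norm (G t) * B * indicator {x..y} s"
      proof (cases "G t = 0")
        case False
        then have "x \<le> t" by (auto simp: G_def indicator_def split: if_splits)
        then show ?thesis using hb[of s] by (auto simp: F_def abs_mult indicator_def mult_left_mono)
      qed (simp add: F_def)
      then show "ennreal (norm (F t s)) \<le> ennreal (norm (G t) * B) * indicator {x..y} s"
        by (auto simp: indicator_def intro: ennreal_leI)
    qed
    also have "\<dots> = (\<integral>\<^sup>+t. ennreal (norm (G t)) * ennreal (B * (y - x)) \<partial>lborel)"
      using xy B0 by (intro nn_integral_cong) (simp add: nn_integral_cmult ennreal_mult[symmetric] mult.assoc)
    also have "\<dots> = (\<integral>\<^sup>+t. ennreal (norm (G t)) \<partial>lborel) * ennreal (B * (y - x))"
      by (rule nn_integral_multc) auto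
    also have "\<dots> < \<infinity>"
      using gi unfolding G_def integrable_iff_bounded by (simp add: ennreal_mult_less_top)
    finally show "(\<integral>\<^sup>+z. ennreal (norm (case_prod F z)) \<partial>(lborel \<Otimes>\<^sub>M lborel)) < \<infinity>" .
  qed
  have step1: "indicator {x..y} t * (hh t * g t) = hh y * G t - (\<integral>s. F t s \<partial>lborel)" for t
  proof (cases "t \<in> {x..y}")
    case True
    have "(\<integral>s. F t s \<partial>lborel) = G t * (\<integral>s. h' s * indicator {t..y} s \<partial>lborel)"
      unfolding F_def by (subst integral_mult_right_zero[symmetric]) (auto intro!: Bochner_Integration.integral_cong simp: indicator_def)
    also have "(\<integral>s. h' s * indicator {t..y} s \<partial>lborel) = hh y - hh t"
      using True by (intro integral_FTC_Icc_real hd hc) auto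
    finally show ?thesis using True by (simp add: G_def algebra_simps)
  next
    case False
    then have "G t = 0" by (simp add: G_def)
    then show ?thesis using False by (simp add: F_def)
  qed
  have int1: "integrable lborel (\<lambda>t. \<integral>s. F t s \<partial>lborel)"
    using lborel_pair.integrable_fst'[OF Fint] by simp
  have "(\<integral>t. indicator {x..y} t * (hh t * g t) \<partial>lborel) = (\<integral>t. hh y * G t - (\<integral>s. F t s \<partial>lborel) \<partial>lborel)"
    using step1 by simp
  also have "\<dots> = hh y * (\<integral>t. G t \<partial>lborel) - (\<integral>t. \<integral>s. F t s \<partial>lborel \<partial>lborel)"
    using gi int1 unfolding G_def by simp
  also have "(\<integral>t. \<integral>s. F t s \<partial>lborel \<partial>lborel) = (\<integral>s. \<integral>t. F t s \<partial>lborel \<partial>lborel)"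
    using lborel_pair.Fubini_integral[OF Fint] by simp
  also have "\<dots> = (\<integral>s. indicator {x..y} s * (h' s * (\<integral>t. indicator {x..s} t * g t \<partial>lborel)) \<partial>lborel)"
  proof (intro Bochner_Integration.integral_cong refl)
    fix s :: real
    have "F t s = indicator {x..y} s * h' s * (indicator {x..s} t * g t)" for t
      by (auto simp: F_def G_def indicator_def)
    then show "(\<integral>t. F t s \<partial>lborel) = indicator {x..y} s * (h' s * (\<integral>t. indicator {x..s} t * g t \<partial>lborel))"
      by simp
  qed
  finally show ?thesis unfolding G_def .
qed



lemma jb_powr_ge: assumes t: "0 \<le> t" and e: "-1 \<le> e" shows "1/(1+t) \<le> jb t powr e"
proof (cases "0 \<le> e")
  case True
  have "1/(1+t) \<le> 1" using t by simp
  also have "1 \<le> jb t powr e" using True jb_ge1[of t] by (simp add: ge_one_powr_ge_zero)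
  finally show ?thesis .
next
  case False
  have "1/(1+t) = (1+t) powr (-1)" using t by (simp add: powr_minus_divide)
  also have "\<dots> \<le> (1+t) powr e" using e t by (intro powr_mono) auto
  also have "\<dots> \<le> jb t powr e" using False jb_le[OF t] jb_pos[of t] by (intro powr_mono2') auto
  finally show ?thesis .
qed

lemma ln_integral_infinite:
  fixes Y c :: real
  assumes Y: "0 \<le> Y" and c: "0 < c"
  shows "(\<integral>\<^sup>+t. ennreal (c / (1+t)) * indicator {Y..} t \<partial>lborel) = \<infinity>"
proof (rule ccontr)
  assume "(\<integral>\<^sup>+t. ennreal (c / (1+t)) * indicator {Y..} t \<partial>lborel) \<noteq> \<infinity>"
  then obtain m where m: "(\<integral>\<^sup>+t. ennreal (c / (1+t)) * indicator {Y..} t \<partial>lborel) = ennreal m" "0 \<le> m"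
    by (cases rule: ennreal_cases[of "\<integral>\<^sup>+t. ennreal (c / (1+t)) * indicator {Y..} t \<partial>lborel"]) auto
  define Z where "Z = (1+Y) * exp (m/c + 1) - 1"
  have "1 \<le> exp (m/c + 1)" using m c by simp
  from mult_left_mono[OF this, of "1+Y"] have "1 + Y \<le> (1+Y) * exp (m/c + 1)" using Y by simp
  then have YZ: "Y \<le> Z" by (simp add: Z_def)
  have lnZ: "ln (1+Z) - ln (1+Y) = m/c + 1" using Y by (simp add: Z_def ln_mult)
  have "(\<integral>\<^sup>+t. ennreal (c / (1+t)) * indicator {Y..Z} t \<partial>lborel) = ennreal (c * ln (1+Z) - c * ln (1+Y))"
  proof (rule nn_integral_FTC_Icc)
    fix t assume "t \<in> {Y..Z}"
    then have "1 + t > 0" using Y by auto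
    then show "DERIV (\<lambda>t. c * ln (1+t)) t :> c / (1+t)"
      by (auto intro!: derivative_eq_intros)
    show "0 \<le> c / (1+t)" using \<open>1 + t > 0\<close> c by simp
  qed (use YZ in auto)
  also have "c * ln (1+Z) - c * ln (1+Y) = m + c" using lnZ c by (simp add: field_simps right_diff_distrib[symmetric])
  finally have eq: "(\<integral>\<^sup>+t. ennreal (c / (1+t)) * indicator {Y..Z} t \<partial>lborel) = ennreal (m + c)" .
  have "(\<integral>\<^sup>+t. ennreal (c / (1+t)) * indicator {Y..Z} t \<partial>lborel) \<le> (\<integral>\<^sup>+t. ennreal (c / (1+t)) * indicator {Y..} t \<partial>lborel)"
    by (intro nn_integral_mono) (auto simp: indicator_def)
  then have "ennreal (m + c) \<le> ennreal m" using eq m(1) by simp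
  then show False using c m by (simp add: ennreal_le_iff)
qed

lemma tail_zero:
  fixes p e L :: real and g G :: "real \<Rightarrow> real"
  assumes p: "0 < p" and e: "-1 \<le> e * p" and g: "in_wLp p e g"
  and lim: "(G \<longlongrightarrow> L) at_top" and Gg: "\<And>y. \<bar>G y\<bar> \<le> \<bar>g y\<bar>"
  shows "L = 0"
proof (rule ccontr)
  assume L: "L \<noteq> 0"
  have "eventually (\<lambda>y. dist (G y) L < \<bar>L\<bar>/2) at_top"
    using lim L by (intro tendstoD) auto
  then obtain Y0 where Y0: "\<And>y. Y0 \<le> y \<Longrightarrow> dist (G y) L < \<bar>L\<bar>/2"
    by (auto simp: eventually_at_top_linorder)
  define Y where "Y = max Y0 0"
  define c where "c = \<bar>L\<bar>/2"
  have c: "0 < c" using L by (simp add: c_def)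
  have gY: "c \<le> \<bar>g y\<bar>" if "Y \<le> y" for y
  proof -
    have "dist (G y) L < \<bar>L\<bar>/2" using that Y0 by (simp add: Y_def)
    then have "c \<le> \<bar>G y\<bar>" unfolding c_def dist_real_def
      using abs_triangle_ineq2[of L "G y"] abs_minus_commute[of L "G y"] by linarith
    then show ?thesis using Gg[of y] by linarith
  qed
  have gm[measurable]: "g \<in> borel_measurable borel" using g by (simp add: in_wLp_def)
  have "(\<integral>\<^sup>+t. ennreal (c powr p / (1+t)) * indicator {Y..} t \<partial>lborel) \<le>
        (\<integral>\<^sup>+t. ennreal (norm (\<bar>g t * jb t powr e\<bar> powr p)) \<partial>lborel)"
  proof (intro nn_integral_mono)
    fix t
    show "ennreal (c powr p / (1+t)) * indicator {Y..} t \<le> ennreal (norm (\<bar>g t * jb t powr e\<bar> powr p))"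
    proof (cases "Y \<le> t")
      case True
      then have t0: "0 \<le> t" by (simp add: Y_def)
      have "c powr p / (1+t) = c powr p * (1/(1+t))" by simp
      also have "\<dots> \<le> \<bar>g t\<bar> powr p * jb t powr (e*p)"
        using gY[OF True] c p jb_powr_ge[OF t0 e] t0 by (intro mult_mono powr_mono2) auto
      also have "\<dots> = \<bar>g t * jb t powr e\<bar> powr p"
        using jb_pos[of t] by (simp add: abs_mult powr_mult powr_powr)
      finally show ?thesis using True by (auto intro: ennreal_leI)
    qed auto
  qed
  moreover have "(\<integral>\<^sup>+t. ennreal (c powr p / (1+t)) * indicator {Y..} t \<partial>lborel) = \<infinity>"
    using c by (intro ln_integral_infinite) (auto simp: Y_def)
  moreover have "(\<integral>\<^sup>+t. ennreal (norm (\<bar>g t * jb t powr e\<bar> powr p)) \<partial>lborel) < \<infinity>"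
    using g unfolding in_wLp_def integrable_iff_bounded by auto
  ultimately show False by (simp add: top_unique)
qed



lemma sd_cont:
  assumes sd: "second_derivs u v u2"
  shows "isCont v z"
proof -
  define a where "a = z - 1"
  define b where "b = z + 1"
  have si: "set_integrable lborel {a..s} u2" for s
    using sd unfolding second_derivs_def by (cases "a \<le> s") (auto simp: set_integrable_def)
  have io: "u2 integrable_on {a..b}" using set_borel_integral_eq_integral(1)[OF si[of b]] .
  have "continuous_on {a..b} (\<lambda>s. v a + integral {a..s} u2)"
    by (intro continuous_intros indefinite_integral_continuous_1 io)
  moreover have eqv: "v s = v a + integral {a..s} u2" if "s \<in> {a..b}" for s
  proof -
    have "v s - v a = (LINT t:{a..s}|lborel. u2 t)" using sd that unfolding second_derivs_def by simp
    then show ?thesis using set_borel_integral_eq_integral(2)[OF si[of s]] by simp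
  qed
  moreover have "continuous_on {a..b} v = continuous_on {a..b} (\<lambda>s. v a + integral {a..s} u2)"
    by (rule continuous_on_cong) (auto intro: eqv)
  ultimately have "continuous_on {a..b} v" by simp
  then show ?thesis
    by (rule continuous_on_interior) (auto simp: a_def b_def)
qed

definition hh :: "real \<Rightarrow> real \<Rightarrow> real" where "hh b t = cosh t powr (-2*b)"

lemma hh_pos: "0 < hh b t" by (simp add: hh_def)
lemma hh_le1: "0 \<le> b \<Longrightarrow> hh b t \<le> 1"
proof -
  assume b: "0 \<le> b"
  have "cosh t powr (-2*b) \<le> 1 powr (-2*b)" using b cosh_real_ge_1[of t] by (intro powr_mono2') auto
  then show ?thesis by (simp add: hh_def)
qed

lemma hh_deriv: "DERIV (hh b) t :> - 2 * b * tanh t * hh b t"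
proof -
  have c: "0 < cosh t" by simp
  have d: "DERIV (\<lambda>t. cosh t powr (-2*b)) t :> (-2*b) * cosh t powr (-2*b - 1) * sinh t"
    using c by (auto intro!: derivative_eq_intros simp: field_simps)
  have eq:  "(-2*b) * cosh t powr (-2*b - 1) * sinh t = - 2 * b * tanh t * hh b t"
  proof -
    have "cosh t powr (-2*b - 1) = cosh t powr (-2*b) / cosh t" using c by (simp add: powr_diff)
    then show ?thesis by (simp add: hh_def tanh_def)
  qed
  show ?thesis using d unfolding eq unfolding hh_def[abs_def] .
qed

lemma hh_cont: "isCont (hh b) t" using DERIV_isCont[OF hh_deriv] .
lemma hh_meas[measurable]: "hh b \<in> borel_measurable borel"
  by (intro borel_measurable_continuous_onI continuous_at_imp_continuous_on ballI hh_cont)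



lemma tanh_meas[measurable]: "(tanh::real\<Rightarrow>real) \<in> borel_measurable borel"
proof -
  have "continuous_on UNIV (\<lambda>x::real. sinh x / cosh x)"
    by (intro continuous_intros) (auto simp: add_pos_pos)
  then show ?thesis unfolding tanh_def[abs_def] by (rule borel_measurable_continuous_onI)
qed

lemma ind_int_cont:
  fixes F :: "real \<Rightarrow> real"
  assumes "\<And>s. isCont F s"
  shows "integrable lborel (\<lambda>t. indicator {x..y} t * F t)"
  using borel_integrable_atLeastAtMost[of x y F] assms by (simp add: mult.commute)

lemma sd_int:
  assumes sd: "second_derivs u v u2" and xy: "x \<le> y"
  shows "integrable lborel (\<lambda>t. indicator {x..y} t * u2 t)"
    and "v y - v x = (\<integral>t. indicator {x..y} t * u2 t \<partial>lborel)"
  using sd xy unfolding second_derivs_def set_integrable_def set_lebesgue_integral_def by auto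

lemma hh_abs_le: assumes b: "0 \<le> b" shows "\<bar>hh b t * z\<bar> \<le> \<bar>z\<bar>"
proof -
  have "\<bar>hh b t * z\<bar> = hh b t * \<bar>z\<bar>" using hh_pos[of b t] by (simp add: abs_mult)
  also have "\<dots> \<le> 1 * \<bar>z\<bar>" using hh_le1[OF b] by (intro mult_right_mono) auto
  finally show ?thesis by simp
qed

lemma repr_v:
  fixes p \<gamma> b x :: real and u v u2 f :: "real \<Rightarrow> real"
  assumes p: "1 < p" and \<gamma>: "\<gamma> > 2 - 1/p" and b: "0 \<le> b"
  and sd: "second_derivs u v u2" and vL: "in_wLp p (\<gamma>-1) v" and fL: "in_wLp p \<gamma> f"
  and u2m[measurable]: "u2 \<in> borel_measurable borel"
  and eq: "AE x in lborel. u2 x - 2 * b * tanh x * v x = f x"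
  shows "hh b x * v x = - (\<integral>t. indicator {x..} t * (hh b t * f t) \<partial>lborel)"
proof -
  have g1: "\<gamma> > 1" using \<gamma> p by (smt (verit) divide_less_eq_1_pos)
  have fint: "integrable lborel f" using wLp_L1[OF p _ fL] \<gamma> p by (smt (verit) divide_pos_pos)
  have fm[measurable]: "f \<in> borel_measurable borel" using fL by (simp add: in_wLp_def)
  have vc: "\<And>z. isCont v z" using sd_cont[OF sd] .
  have vm[measurable]: "v \<in> borel_measurable borel"
    by (intro borel_measurable_continuous_onI continuous_at_imp_continuous_on ballI vc)
  define h' where "h' = (\<lambda>s. - 2 * b * tanh s * hh b s)"
  have h'c: "\<And>s. isCont h' s" unfolding h'_def by (intro continuous_intros hh_cont) auto
  have h'b: "\<bar>h' s\<bar> \<le> 2 * b" for s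
  proof -
    have "\<bar>tanh s\<bar> \<le> 1" using tanh_real_bounds[of s] by auto
    moreover have "\<bar>hh b s\<bar> \<le> 1" using hh_le1[OF b] hh_pos[of b s] by simp
    ultimately have "\<bar>tanh s\<bar> * \<bar>hh b s\<bar> \<le> 1" by (simp add: mult_le_one)
    then show ?thesis unfolding h'_def using b by (simp add: abs_mult mult_left_le)
  qed
  have hfint: "integrable lborel (\<lambda>t. indicator A t * (hh b t * f t))" if A[measurable]: "A \<in> sets borel" for A :: "real set"
  proof (rule Bochner_Integration.integrable_bound[OF fint])
    show "AE t in lborel. norm (indicator A t * (hh b t * f t)) \<le> norm (f t)"
      using hh_abs_le[OF b] by (intro AE_I2) (auto simp: indicator_def)
  qed simp
  have key: "hh b y * v y - hh b x * v x = (\<integral>t. indicator {x..y} t * (hh b t * f t) \<partial>lborel)"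
    if xy: "x \<le> y" for y
  proof -
    note si = sd_int[OF sd]
    have ibp1: "(\<integral>t. indicator {x..y} t * (hh b t * u2 t) \<partial>lborel) =
      hh b y * (\<integral>t. indicator {x..y} t * u2 t \<partial>lborel) -
      (\<integral>s. indicator {x..y} s * (h' s * (\<integral>t. indicator {x..s} t * u2 t \<partial>lborel)) \<partial>lborel)"
      by (rule ibp[OF xy si(1)[OF xy] _ h'c h'b]) (unfold h'_def, rule hh_deriv)
    have "(\<integral>s. indicator {x..y} s * (h' s * (\<integral>t. indicator {x..s} t * u2 t \<partial>lborel)) \<partial>lborel) =
          (\<integral>s. indicator {x..y} s * (h' s * v s) - v x * (indicator {x..y} s * h' s) \<partial>lborel)"
    proof (intro Bochner_Integration.integral_cong refl)
      fix s
      show "indicator {x..y} s * (h' s * (\<integral>t. indicator {x..s} t * u2 t \<partial>lborel)) =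
            indicator {x..y} s * (h' s * v s) - v x * (indicator {x..y} s * h' s)"
        using si(2)[of x s] by (cases "s \<in> {x..y}") (auto simp: algebra_simps)
    qed
    also have "\<dots> = (\<integral>s. indicator {x..y} s * (h' s * v s) \<partial>lborel) - v x * (\<integral>s. indicator {x..y} s * h' s \<partial>lborel)"
      using ind_int_cont[of "\<lambda>s. h' s * v s" x y] ind_int_cont[of h' x y] h'c vc by simp
    also have "(\<integral>s. indicator {x..y} s * h' s \<partial>lborel) = hh b y - hh b x"
    proof -
      have "(\<integral>s. h' s * indicator {x..y} s \<partial>lborel) = hh b y - hh b x"
        by (rule integral_FTC_Icc_real[OF xy]) (use hh_deriv[of b] h'c in \<open>auto simp: h'_def\<close>)
      then show ?thesis by (simp add: mult.commute)
    qed
    finally have A: "(\<integral>s. indicator {x..y} s * (h' s * (\<integral>t. indicator {x..s} t * u2 t \<partial>lborel)) \<partial>lborel) =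
       (\<integral>s. indicator {x..y} s * (h' s * v s) \<partial>lborel) - v x * (hh b y - hh b x)" .
    have "(\<integral>t. indicator {x..y} t * (hh b t * u2 t) \<partial>lborel) =
          (\<integral>t. indicator {x..y} t * (hh b t * f t) - indicator {x..y} t * (h' t * v t) \<partial>lborel)"
    proof (rule integral_cong_AE)
      show "AE t in lborel. indicator {x..y} t * (hh b t * u2 t) = indicator {x..y} t * (hh b t * f t) - indicator {x..y} t * (h' t * v t)"
        using eq by eventually_elim (auto simp: h'_def algebra_simps)
    qed (auto simp: h'_def)
    also have "\<dots> = (\<integral>t. indicator {x..y} t * (hh b t * f t) \<partial>lborel) - (\<integral>t. indicator {x..y} t * (h' t * v t) \<partial>lborel)"
      using hfint ind_int_cont[of "\<lambda>s. h' s * v s" x y] h'c vc by simp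
    finally show ?thesis using ibp1 A si(2)[OF xy] by (simp add: algebra_simps)
  qed
  define L where "L = hh b x * v x + (\<integral>t. indicator {x..} t * (hh b t * f t) \<partial>lborel)"
  have lim0: "((\<lambda>y. \<integral>t. indicator {..y} t *\<^sub>R (indicator {x..} t * (hh b t * f t)) \<partial>lborel) \<longlongrightarrow>
        (\<integral>t. indicator {x..} t * (hh b t * f t) \<partial>lborel)) at_top"
    by (rule tendsto_integral_at_top) (auto intro: hfint)
  have "((\<lambda>y. hh b x * v x + (\<integral>t. indicator {..y} t *\<^sub>R (indicator {x..} t * (hh b t * f t)) \<partial>lborel)) \<longlongrightarrow> L) at_top"
    unfolding L_def by (rule tendsto_add[OF tendsto_const lim0])
  then have "((\<lambda>y. hh b y * v y) \<longlongrightarrow> L) at_top"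
  proof (rule Lim_transform_eventually)
    show "\<forall>\<^sub>F y in at_top. hh b x * v x + (\<integral>t. indicator {..y} t *\<^sub>R (indicator {x..} t * (hh b t * f t)) \<partial>lborel) = hh b y * v y"
    proof (rule eventually_at_top_linorderI[of x])
      fix y assume "x \<le> y"
      have "(\<integral>t. indicator {..y} t *\<^sub>R (indicator {x..} t * (hh b t * f t)) \<partial>lborel) = (\<integral>t. indicator {x..y} t * (hh b t * f t) \<partial>lborel)"
        by (intro Bochner_Integration.integral_cong) (auto simp: indicator_def)
      then show "hh b x * v x + (\<integral>t. indicator {..y} t *\<^sub>R (indicator {x..} t * (hh b t * f t)) \<partial>lborel) = hh b y * v y"
        using key[OF \<open>x \<le> y\<close>] by simp
    qed
  qed
  moreover have "\<bar>hh b y * v y\<bar> \<le> \<bar>v y\<bar>" for y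
    using hh_abs_le[OF b] by simp
  moreover have "0 < (\<gamma>-1) * p" using p g1 by simp
  ultimately have "L = 0"
    by (intro tail_zero[OF _ _ vL, of "\<lambda>y. hh b y * v y"]) (use p in auto)
  then show ?thesis by (simp add: L_def algebra_simps)
qed



lemma repr_u:
  fixes p \<gamma> x :: real and u v u2 :: "real \<Rightarrow> real"
  assumes p: "1 < p" and \<gamma>: "\<gamma> > 2 - 1/p"
  and sd: "second_derivs u v u2" and uL: "in_wLp p (\<gamma>-2) u" and vL: "in_wLp p (\<gamma>-1) v"
  shows "u x = - (\<integral>t. indicator {x..} t * v t \<partial>lborel)"
proof -
  have gp: "\<gamma> * p > 2 * p - 1" using \<gamma> p by (simp add: field_simps)
  have vint: "integrable lborel v" using wLp_L1[OF p _ vL] gp p by (simp add: field_simps)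
  have vc: "\<And>z. isCont v z" using sd_cont[OF sd] .
  have vm[measurable]: "v \<in> borel_measurable borel"
    by (intro borel_measurable_continuous_onI continuous_at_imp_continuous_on ballI vc)
  have ud: "\<And>s. DERIV u s :> v s" using sd unfolding second_derivs_def by auto
  have key: "u y - u x = (\<integral>t. indicator {x..y} t * v t \<partial>lborel)" if xy: "x \<le> y" for y
  proof -
    have "(\<integral>t. v t * indicator {x..y} t \<partial>lborel) = u y - u x"
      by (rule integral_FTC_Icc_real[OF xy]) (use ud vc in auto)
    then show ?thesis by (simp add: mult.commute)
  qed
  have iv: "integrable lborel (\<lambda>t. indicator {x..} t * v t)"
    using vint by (rule Bochner_Integration.integrable_bound) (auto simp: indicator_def)
  define L where "L = u x + (\<integral>t. indicator {x..} t * v t \<partial>lborel)"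
  have lim0: "((\<lambda>y. \<integral>t. indicator {..y} t *\<^sub>R (indicator {x..} t * v t) \<partial>lborel) \<longlongrightarrow>
        (\<integral>t. indicator {x..} t * v t \<partial>lborel)) at_top"
    by (rule tendsto_integral_at_top) (auto intro: iv)
  have "((\<lambda>y. u x + (\<integral>t. indicator {..y} t *\<^sub>R (indicator {x..} t * v t) \<partial>lborel)) \<longlongrightarrow> L) at_top"
    unfolding L_def by (rule tendsto_add[OF tendsto_const lim0])
  then have "(u \<longlongrightarrow> L) at_top"
  proof (rule Lim_transform_eventually)
    show "\<forall>\<^sub>F y in at_top. u x + (\<integral>t. indicator {..y} t *\<^sub>R (indicator {x..} t * v t) \<partial>lborel) = u y"
    proof (rule eventually_at_top_linorderI[of x])
      fix y assume "x \<le> y"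
      have "(\<integral>t. indicator {..y} t *\<^sub>R (indicator {x..} t * v t) \<partial>lborel) = (\<integral>t. indicator {x..y} t * v t \<partial>lborel)"
        by (intro Bochner_Integration.integral_cong) (auto simp: indicator_def)
      then show "u x + (\<integral>t. indicator {..y} t *\<^sub>R (indicator {x..} t * v t) \<partial>lborel) = u y"
        using key[OF \<open>x \<le> y\<close>] by simp
    qed
  qed
  moreover have "-1 \<le> (\<gamma>-2) * p" using gp by (simp add: algebra_simps)
  ultimately have "L = 0"
    by (intro tail_zero[OF _ _ uL, of u]) (use p in auto)
  then show ?thesis by (simp add: L_def algebra_simps)
qed



definition hyp :: "real \<Rightarrow> real \<Rightarrow> real \<Rightarrow> (real \<Rightarrow> real) \<Rightarrow> (real \<Rightarrow> real) \<Rightarrow> (real \<Rightarrow> real) \<Rightarrow> (real \<Rightarrow> real) \<Rightarrow> bool" where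
  "hyp p \<gamma> b u v u2 f \<longleftrightarrow> 0 \<le> b \<and> second_derivs u v u2 \<and> in_wLp p (\<gamma>-2) u \<and> in_wLp p (\<gamma>-1) v \<and>
     in_wLp p \<gamma> f \<and> u2 \<in> borel_measurable borel \<and> (AE x in lborel. u2 x - 2 * b * tanh x * v x = f x)"

lemma abs_hh[simp]: "\<bar>hh b t\<bar> = hh b t" using hh_pos[of b t] by simp

lemma hh_mult_le: "0 \<le> b \<Longrightarrow> \<bar>z\<bar> * hh b t \<le> \<bar>z\<bar>"
  using hh_le1[of b t] by (simp add: mult_left_le)

lemma v_bound:
  assumes p: "1 < p" and \<gamma>: "\<gamma> > 2 - 1/p" and H: "hyp p \<gamma> b u v u2 f"
  shows "ennreal \<bar>v x\<bar> \<le> (\<integral>\<^sup>+t. ennreal (indicator {x..} t * (\<bar>f t\<bar> * (hh b t / hh b x))) \<partial>lborel)"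
proof -
  have b: "0 \<le> b" and fL: "in_wLp p \<gamma> f" using H by (auto simp: hyp_def)
  have fint: "integrable lborel f" using wLp_L1[OF p _ fL] \<gamma> p by (smt (verit) divide_pos_pos)
  have fm[measurable]: "f \<in> borel_measurable borel" using fL by (simp add: in_wLp_def)
  have R: "hh b x * v x = - (\<integral>t. indicator {x..} t * (hh b t * f t) \<partial>lborel)"
    using H by (intro repr_v[OF p \<gamma>]) (auto simp: hyp_def)
  have i1: "integrable lborel (\<lambda>t. indicator {x..} t * (hh b t * f t))"
    by (rule Bochner_Integration.integrable_bound[OF fint]) (auto simp: indicator_def abs_mult hh_mult_le[OF b] mult.commute)
  have i2: "integrable lborel (\<lambda>t. indicator {x..} t * (\<bar>f t\<bar> * hh b t))"
    by (rule Bochner_Integration.integrable_bound[OF fint]) (auto simp: indicator_def abs_mult hh_mult_le[OF b])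
  have "hh b x * \<bar>v x\<bar> = \<bar>\<integral>t. indicator {x..} t * (hh b t * f t) \<partial>lborel\<bar>"
    using R hh_pos[of b x] by (metis abs_minus_cancel abs_mult abs_of_pos)
  also have "\<dots> \<le> (\<integral>t. indicator {x..} t * (\<bar>f t\<bar> * hh b t) \<partial>lborel)"
    by (rule integral_abs_bound_integral[OF i1 i2]) (auto simp: indicator_def abs_mult hh_pos less_imp_le)
  finally have "\<bar>v x\<bar> \<le> (\<integral>t. indicator {x..} t * (\<bar>f t\<bar> * hh b t) \<partial>lborel) / hh b x"
    using hh_pos[of b x] by (simp add: field_simps)
  also have "\<dots> = (\<integral>t. indicator {x..} t * (\<bar>f t\<bar> * (hh b t / hh b x)) \<partial>lborel)"
    by (simp add: mult.assoc)
  finally have le: "\<bar>v x\<bar> \<le> (\<integral>t. indicator {x..} t * (\<bar>f t\<bar> * (hh b t / hh b x)) \<partial>lborel)" .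
  have i3: "integrable lborel (\<lambda>t. indicator {x..} t * (\<bar>f t\<bar> * (hh b t / hh b x)))"
    using i2 by (simp add: mult.assoc)
  have "(\<integral>\<^sup>+t. ennreal (indicator {x..} t * (\<bar>f t\<bar> * (hh b t / hh b x))) \<partial>lborel) =
        ennreal (\<integral>t. indicator {x..} t * (\<bar>f t\<bar> * (hh b t / hh b x)) \<partial>lborel)"
    by (rule nn_integral_eq_integral[OF i3]) (auto simp: hh_pos less_imp_le)
  then show ?thesis using le by (simp add: ennreal_leI)
qed

lemma hh_anti: assumes b: "0 \<le> b" and x: "0 \<le> x" and xt: "x \<le> t" shows "hh b t \<le> hh b x"
proof -
  have "cosh x \<le> cosh t" using cosh_real_strict_mono[OF x, of t] xt by (cases "x = t") auto
  then show ?thesis unfolding hh_def using b by (intro powr_mono2') auto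
qed

lemma conv1:
  assumes x: "0 \<le> x" and p: "0 < p"
  shows "\<bar>z * jb x powr e\<bar> powr p \<le> (2 powr (\<bar>e\<bar>/2)) powr p * (\<bar>z\<bar> * (1+x) powr e) powr p"
proof -
  have "\<bar>z * jb x powr e\<bar> = \<bar>z\<bar> * jb x powr e" by (simp add: abs_mult)
  also have "\<dots> \<le> \<bar>z\<bar> * (2 powr (\<bar>e\<bar>/2) * (1+x) powr e)" by (intro mult_left_mono w_le_rho x) auto
  finally have "\<bar>z * jb x powr e\<bar> powr p \<le> (2 powr (\<bar>e\<bar>/2) * (\<bar>z\<bar> * (1+x) powr e)) powr p"
    using p by (intro powr_mono2) (auto simp: ac_simps)
  then show ?thesis by (simp add: powr_mult)
qed

lemma conv2:
  assumes x: "0 \<le> x" and p: "0 < p"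
  shows "(\<bar>z\<bar> * (1+x) powr e) powr p \<le> (2 powr (\<bar>e\<bar>/2)) powr p * \<bar>z * jb x powr e\<bar> powr p"
proof -
  have "\<bar>z\<bar> * (1+x) powr e \<le> \<bar>z\<bar> * (2 powr (\<bar>e\<bar>/2) * jb x powr e)" by (intro mult_left_mono rho_le_w x) auto
  also have "\<dots> = 2 powr (\<bar>e\<bar>/2) * \<bar>z * jb x powr e\<bar>" by (simp add: abs_mult)
  finally have "(\<bar>z\<bar> * (1+x) powr e) powr p \<le> (2 powr (\<bar>e\<bar>/2) * \<bar>z * jb x powr e\<bar>) powr p"
    using p x by (intro powr_mono2) auto
  then show ?thesis by (simp add: powr_mult)
qed



definition CH :: "real \<Rightarrow> real \<Rightarrow> real" where
  "CH p a = ((a + (-a + (a+1)/(p-1))/2) powr (1-p)) / (a + 1 - ((-a + (a+1)/(p-1))/2) * (p-1))"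

definition cw :: "real \<Rightarrow> real \<Rightarrow> real" where "cw e p = (2 powr (\<bar>e\<bar>/2)) powr p"

lemma hardy_apply:
  fixes F G :: "real \<Rightarrow> real"
  assumes p: "1 < p" and a: "a > -1/p"
  and Fm[measurable]: "F \<in> borel_measurable borel" and Gm[measurable]: "G \<in> borel_measurable borel"
  and bnd: "\<And>x. 0 \<le> x \<Longrightarrow> ennreal \<bar>F x\<bar> \<le> (\<integral>\<^sup>+t. ennreal (indicator {x..} t * \<bar>G t\<bar>) \<partial>lborel)"
  shows "(\<integral>\<^sup>+x. ennreal (indicator {0..} x * \<bar>F x * jb x powr a\<bar> powr p) \<partial>lborel) \<le>
    ennreal (cw a p) * ennreal (CH p a) * ennreal (cw (a+1) p) *
    (\<integral>\<^sup>+x. ennreal (indicator {0..} x * \<bar>G x * jb x powr (a+1)\<bar> powr p) \<partial>lborel)"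
proof -
  define h where "h = (\<lambda>x. \<bar>F x\<bar> * (1+x) powr a)"
  define g where "g = (\<lambda>t. \<bar>G t\<bar> * (1+t) powr (a+1))"
  have H: "(\<integral>\<^sup>+x. ennreal (indicator {0..} x * h x powr p) \<partial>lborel) \<le> ennreal (CH p a) *
     (\<integral>\<^sup>+t. ennreal (indicator {0..} t * g t powr p) \<partial>lborel)"
    unfolding CH_def
  proof (rule hardy[OF p a])
    show "g \<in> borel_measurable borel" unfolding g_def by measurable
    show "\<And>t. 0 \<le> g t" "\<And>x. 0 \<le> h x" unfolding g_def h_def by auto
    fix x :: real assume x: "0 \<le> x"
    have "ennreal (h x) = ennreal ((1+x) powr a) * ennreal \<bar>F x\<bar>"
      unfolding h_def by (simp add: ennreal_mult[symmetric] mult.commute)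
    also have "\<dots> \<le> ennreal ((1+x) powr a) * (\<integral>\<^sup>+t. ennreal (indicator {x..} t * \<bar>G t\<bar>) \<partial>lborel)"
      by (intro mult_left_mono bnd x) auto
    also have "\<dots> = (\<integral>\<^sup>+t. ennreal ((1+x) powr a) * ennreal (indicator {x..} t * \<bar>G t\<bar>) \<partial>lborel)"
      by (rule nn_integral_cmult[symmetric]) auto
    also have "\<dots> = (\<integral>\<^sup>+t. ennreal (if x \<le> t then (1+x) powr a * (1+t) powr (-a-1) * g t else 0) \<partial>lborel)"
    proof (intro nn_integral_cong)
      fix t :: real
      show "ennreal ((1+x) powr a) * ennreal (indicator {x..} t * \<bar>G t\<bar>) = ennreal (if x \<le> t then (1+x) powr a * (1+t) powr (-a-1) * g t else 0)"
      proof (cases "x \<le> t")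
        case True
        then have t1: "0 < 1 + t" using x by simp
        have "(1+t) powr (-a-1) * (1+t) powr (a+1) = 1" using t1 by (simp add: powr_add[symmetric])
        then have eq: "(1+x) powr a * (1+t) powr (-a-1) * g t = (1+x) powr a * \<bar>G t\<bar>"
          unfolding g_def by (metis (no_types, opaque_lifting) mult.assoc mult.left_commute mult.right_neutral)
        have "ennreal ((1+x) powr a) * ennreal (indicator {x..} t * \<bar>G t\<bar>) = ennreal ((1+x) powr a * \<bar>G t\<bar>)"
          using True by (simp add: ennreal_mult[symmetric])
        then show ?thesis by (simp only: if_P[OF True] eq)
      qed simp
    qed
    finally show "ennreal (h x) \<le> (\<integral>\<^sup>+t. ennreal (if x \<le> t then (1+x) powr a * (1+t) powr (-a-1) * g t else 0) \<partial>lborel)" .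
  qed
  have B1: "(\<integral>\<^sup>+t. ennreal (indicator {0..} t * g t powr p) \<partial>lborel) \<le>
        (\<integral>\<^sup>+t. ennreal (cw (a+1) p) * ennreal (indicator {0..} t * \<bar>G t * jb t powr (a+1)\<bar> powr p) \<partial>lborel)"
  proof (intro nn_integral_mono)
    fix x :: real
    show "ennreal (indicator {0..} x * g x powr p) \<le> ennreal (cw (a+1) p) * ennreal (indicator {0..} x * \<bar>G x * jb x powr (a+1)\<bar> powr p)"
    proof (cases "0 \<le> x")
      case True
      then show ?thesis using conv2[OF True, of p "G x" "a+1"] p
        by (auto simp: ennreal_mult[symmetric] cw_def g_def intro!: ennreal_leI)
    qed simp
  qed
  also have "\<dots> = ennreal (cw (a+1) p) * (\<integral>\<^sup>+t. ennreal (indicator {0..} t * \<bar>G t * jb t powr (a+1)\<bar> powr p) \<partial>lborel)"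
    by (rule nn_integral_cmult) measurable
  finally have B: "(\<integral>\<^sup>+t. ennreal (indicator {0..} t * g t powr p) \<partial>lborel) \<le> ennreal (cw (a+1) p) * (\<integral>\<^sup>+t. ennreal (indicator {0..} t * \<bar>G t * jb t powr (a+1)\<bar> powr p) \<partial>lborel)" .
  have "(\<integral>\<^sup>+x. ennreal (indicator {0..} x * \<bar>F x * jb x powr a\<bar> powr p) \<partial>lborel) \<le>
        (\<integral>\<^sup>+x. ennreal (cw a p) * ennreal (indicator {0..} x * h x powr p) \<partial>lborel)"
  proof (intro nn_integral_mono)
    fix x :: real
    show "ennreal (indicator {0..} x * \<bar>F x * jb x powr a\<bar> powr p) \<le> ennreal (cw a p) * ennreal (indicator {0..} x * h x powr p)"
    proof (cases "0 \<le> x")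
      case True
      then show ?thesis using conv1[OF True, of p "F x" a] p
        by (auto simp: ennreal_mult[symmetric] cw_def h_def intro!: ennreal_leI)
    qed simp
  qed
  also have "\<dots> = ennreal (cw a p) * (\<integral>\<^sup>+x. ennreal (indicator {0..} x * h x powr p) \<partial>lborel)"
    unfolding h_def by (rule nn_integral_cmult) measurable
  also have "\<dots> \<le> ennreal (cw a p) * (ennreal (CH p a) * (\<integral>\<^sup>+t. ennreal (indicator {0..} t * g t powr p) \<partial>lborel))"
    by (intro mult_left_mono H) auto
  also have "\<dots> \<le> ennreal (cw a p) * (ennreal (CH p a) * (ennreal (cw (a+1) p) * (\<integral>\<^sup>+t. ennreal (indicator {0..} t * \<bar>G t * jb t powr (a+1)\<bar> powr p) \<partial>lborel)))"
    by (intro mult_left_mono B) auto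
  finally show ?thesis by (simp add: ac_simps)
qed



lemma hh_0[simp]: "hh 0 t = 1" by (simp add: hh_def)
lemma hh_at0[simp]: "hh b 0 = 1" by (simp add: hh_def)

lemma tanh_mono_le: "x \<le> t \<Longrightarrow> tanh x \<le> tanh (t::real)"
  by (cases "x = t") (auto simp: less_eq_real_def)

lemma jb_ratio_le: assumes "0 \<le> x" "x \<le> t" "0 \<le> \<gamma>" shows "jb x powr \<gamma> / jb t powr \<gamma> \<le> 1"
proof -
  have "jb x powr \<gamma> \<le> jb t powr \<gamma>" using assms jb_mono[of x t] jb_pos[of x] by (intro powr_mono2) auto
  then show ?thesis using jb_pos[of t] by simp
qed

lemma rows_int:
  assumes b: "0 \<le> b" and x: "0 \<le> x"
  shows "(\<integral>\<^sup>+t. ennreal (2*b*tanh t*hh b t) * indicator {x..} t \<partial>lborel) \<le> ennreal (hh b x)"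
proof (cases "b = 0")
  case True then show ?thesis by simp
next
  case False
  then have b0: "0 < b" using b by simp
  have lim: "((\<lambda>t. - hh b t) \<longlongrightarrow> -0) at_top"
    unfolding hh_def using b0
    by (intro tendsto_minus tendsto_neg_powr cosh_real_at_top) auto
  have "(\<integral>\<^sup>+t. ennreal (2*b*tanh t*hh b t) * indicator {x..} t \<partial>lborel) = ennreal (-0 - (- hh b x))"
  proof (rule nn_integral_FTC_atLeast[OF _ _ _ lim])
    show "(\<lambda>t. 2*b*tanh t*hh b t) \<in> borel_measurable borel" by measurable
    fix t assume "x \<le> t"
    show "DERIV (\<lambda>t. - hh b t) t :> 2*b*tanh t*hh b t"
      using DERIV_minus[OF hh_deriv[of b t]] by simp
    show "0 \<le> 2*b*tanh t*hh b t" using b \<open>x \<le> t\<close> x hh_pos[of b t] by simp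
  qed
  then show ?thesis by simp
qed

lemma cols_int:
  assumes b: "0 \<le> b" and t: "0 \<le> t"
  shows "(\<integral>\<^sup>+x. ennreal (2*b*tanh x / hh b x) * indicator {0..t} x \<partial>lborel) \<le> ennreal (1 / hh b t)"
proof -
  have "(\<integral>\<^sup>+x. ennreal (2*b*tanh x / hh b x) * indicator {0..t} x \<partial>lborel) = ennreal (1 / hh b t - 1 / hh b 0)"
  proof (rule nn_integral_FTC_Icc)
    show "(\<lambda>x. 2*b*tanh x / hh b x) \<in> borel_measurable borel" by measurable
    fix x :: real assume x: "x \<in> {0..t}"
    have "DERIV (\<lambda>x. 1 / hh b x) x :> - (- 2 * b * tanh x * hh b x) / (hh b x * hh b x)"
      using DERIV_inverse_fun[OF hh_deriv[of b x]] hh_pos[of b x] by (simp add: divide_inverse)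
    moreover have "- (- 2 * b * tanh x * hh b x) / (hh b x * hh b x) = 2*b*tanh x / hh b x"
      using hh_pos[of b x] by (simp add: field_simps)
    ultimately show "DERIV (\<lambda>x. 1 / hh b x) x :> 2*b*tanh x / hh b x" by simp
    show "0 \<le> 2*b*tanh x / hh b x" using b x hh_pos[of b x] by simp
  qed (use t in auto)
  then show ?thesis by (simp add: ennreal_leI)
qed

lemma E2_half:
  assumes p: "1 < p" and \<gamma>: "\<gamma> > 2 - 1/p" and H: "hyp p \<gamma> b u v u2 f"
  shows "(\<integral>\<^sup>+x. ennreal (indicator {0..} x * \<bar>2*b*tanh x * v x * jb x powr \<gamma>\<bar> powr p) \<partial>lborel) \<le>
         (\<integral>\<^sup>+t. ennreal (\<bar>f t * jb t powr \<gamma>\<bar> powr p) \<partial>lborel)"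
proof -
  have b: "0 \<le> b" and fL: "in_wLp p \<gamma> f" and sd: "second_derivs u v u2" using H by (auto simp: hyp_def)
  have g1: "\<gamma> > 1" using \<gamma> p by (smt (verit) divide_less_eq_1_pos)
  have fm[measurable]: "f \<in> borel_measurable borel" using fL by (simp add: in_wLp_def)
  define K where "K = (\<lambda>x t. if 0 \<le> x \<and> x \<le> t then 2*b*tanh x * (hh b t / hh b x) * (jb x powr \<gamma> / jb t powr \<gamma>) else 0)"
  define g where "g = (\<lambda>t. \<bar>f t\<bar> * jb t powr \<gamma>)"
  define h where "h = (\<lambda>x. indicator {0..} x * \<bar>2*b*tanh x * v x * jb x powr \<gamma>\<bar>)"
  have K0: "0 \<le> K x t" for x t using b hh_pos[of b] jb_pos
    by (auto simp: K_def hh_pos[THEN less_imp_le] jb_pos[THEN less_imp_le] intro!: mult_nonneg_nonneg divide_nonneg_nonneg)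
  have "(\<integral>\<^sup>+x. ennreal (h x powr p) \<partial>lborel) \<le> ennreal 1 * (\<integral>\<^sup>+t. ennreal (g t powr p) \<partial>lborel)"
  proof (rule schur[OF p, where \<phi>="\<lambda>_. 1" and a="\<lambda>_. 1"])
    have "(\<lambda>z. K (fst z) (snd z)) \<in> borel_measurable (borel \<Otimes>\<^sub>M borel)"
      unfolding K_def by measurable
    then show "(\<lambda>(x,t). K x t) \<in> borel_measurable borel" by (simp add: borel_prod case_prod_beta')
    show "g \<in> borel_measurable borel" unfolding g_def by measurable
    show "\<And>x t. 0 \<le> K x t" by (rule K0)
    show "\<And>t. 0 \<le> g t" unfolding g_def by simp
    show "\<And>x. 0 \<le> h x" unfolding h_def by simp
  next
    fix x :: real
    show "(\<integral>\<^sup>+t. ennreal (K x t * 1) \<partial>lborel) \<le> ennreal 1"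
    proof (cases "0 \<le> x")
      case True
      have "(\<integral>\<^sup>+t. ennreal (K x t * 1) \<partial>lborel) \<le> (\<integral>\<^sup>+t. ennreal (1 / hh b x) * (ennreal (2*b*tanh t*hh b t) * indicator {x..} t) \<partial>lborel)"
      proof (intro nn_integral_mono)
        fix t :: real
        show "ennreal (K x t * 1) \<le> ennreal (1 / hh b x) * (ennreal (2*b*tanh t*hh b t) * indicator {x..} t)"
        proof (cases "x \<le> t")
          case xt: True
          have Kx: "K x t = (2*b*tanh x * (hh b t / hh b x)) * (jb x powr \<gamma> / jb t powr \<gamma>)"
            using True xt by (simp add: K_def)
          have A: "2*b*tanh x \<le> 2*b*tanh t" using b tanh_mono_le[OF xt] by (simp add: mult_left_mono)
          have B0: "0 \<le> hh b t / hh b x" using hh_pos[of b] by (simp add: less_imp_le)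
          have A2: "2*b*tanh x * (hh b t / hh b x) \<le> 2*b*tanh t * (hh b t / hh b x)"
            by (rule mult_right_mono[OF A B0])
          have A3: "0 \<le> 2*b*tanh t * (hh b t / hh b x)" using b xt True B0 by (intro mult_nonneg_nonneg) auto
          have R: "jb x powr \<gamma> / jb t powr \<gamma> \<le> 1" using jb_ratio_le[OF True xt] g1 by simp
          have R0: "0 \<le> jb x powr \<gamma> / jb t powr \<gamma>" by simp
          have "K x t \<le> 2*b*tanh t * (hh b t / hh b x) * 1"
            unfolding Kx by (rule mult_mono[OF A2 R A3 R0])
          also have "\<dots> = (1 / hh b x) * (2*b*tanh t*hh b t)" by simp
          finally have KK: "K x t \<le> (1 / hh b x) * (2*b*tanh t*hh b t)" .
          have n1: "0 \<le> 1 / hh b x" using hh_pos[of b x] by simp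
          have n2: "0 \<le> 2*b*tanh t*hh b t" using b xt True hh_pos[of b t] by simp
          have E: "ennreal (1 / hh b x) * (ennreal (2*b*tanh t*hh b t) * indicator {x..} t) = ennreal (1 / hh b x * (2*b*tanh t*hh b t))"
            using xt by (subst ennreal_mult[OF n1 n2]) simp
          show ?thesis unfolding E by (rule ennreal_leI) (use KK in simp)
        qed (simp add: K_def)
      qed
      also have "\<dots> = ennreal (1 / hh b x) * (\<integral>\<^sup>+t. ennreal (2*b*tanh t*hh b t) * indicator {x..} t \<partial>lborel)"
        by (rule nn_integral_cmult) measurable
      also have "\<dots> \<le> ennreal (1 / hh b x) * ennreal (hh b x)"
        by (intro mult_left_mono rows_int b True) auto
      also have "\<dots> = ennreal 1" using hh_pos[of b x] by (simp add: ennreal_mult[symmetric])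
      finally show ?thesis .
    qed (simp add: K_def)
  next
    fix t :: real
    show "(\<integral>\<^sup>+x. ennreal (1 powr (p-1) * K x t) \<partial>lborel) \<le> ennreal (1 * 1 powr (p-1))"
    proof (cases "0 \<le> t")
      case True
      have "(\<integral>\<^sup>+x. ennreal (1 powr (p-1) * K x t) \<partial>lborel) \<le> (\<integral>\<^sup>+x. ennreal (hh b t) * (ennreal (2*b*tanh x / hh b x) * indicator {0..t} x) \<partial>lborel)"
      proof (intro nn_integral_mono)
        fix x :: real
        show "ennreal (1 powr (p-1) * K x t) \<le> ennreal (hh b t) * (ennreal (2*b*tanh x / hh b x) * indicator {0..t} x)"
        proof (cases "0 \<le> x \<and> x \<le> t")
          case xt: True
          have Kx: "K x t = (2*b*tanh x * (hh b t / hh b x)) * (jb x powr \<gamma> / jb t powr \<gamma>)"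
            using xt by (simp add: K_def)
          have A3: "0 \<le> 2*b*tanh x * (hh b t / hh b x)" using b xt hh_pos[of b] by (intro mult_nonneg_nonneg divide_nonneg_nonneg) (auto simp: less_imp_le)
          have R: "jb x powr \<gamma> / jb t powr \<gamma> \<le> 1" using jb_ratio_le[of x t \<gamma>] xt g1 by simp
          have "K x t \<le> 2*b*tanh x * (hh b t / hh b x) * 1"
            unfolding Kx by (rule mult_left_mono[OF R A3])
          also have "\<dots> = hh b t * (2*b*tanh x / hh b x)" by simp
          finally have KK: "K x t \<le> hh b t * (2*b*tanh x / hh b x)" .
          have n1: "0 \<le> hh b t" using hh_pos[of b t] by simp
          have n2: "0 \<le> 2*b*tanh x / hh b x" using b xt hh_pos[of b x] by simp
          have E: "ennreal (hh b t) * (ennreal (2*b*tanh x / hh b x) * indicator {0..t} x) = ennreal (hh b t * (2*b*tanh x / hh b x))"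
            using xt by (subst ennreal_mult[OF n1 n2]) simp
          show ?thesis unfolding E by (rule ennreal_leI) (use KK in simp)
        qed (auto simp: K_def)
      qed
      also have "\<dots> = ennreal (hh b t) * (\<integral>\<^sup>+x. ennreal (2*b*tanh x / hh b x) * indicator {0..t} x \<partial>lborel)"
        by (rule nn_integral_cmult) measurable
      also have "\<dots> \<le> ennreal (hh b t) * ennreal (1 / hh b t)"
        by (intro mult_left_mono cols_int b True) auto
      also have "\<dots> = ennreal (1 * 1 powr (p-1))" using hh_pos[of b t] by (simp add: ennreal_mult[symmetric])
      finally show ?thesis .
    next
      case False
      then have "(\<lambda>x. ennreal (1 powr (p-1) * K x t)) = (\<lambda>x. 0)" by (auto simp: K_def fun_eq_iff)
      then show ?thesis by simp
    qed
  next
    fix x :: real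
    show "ennreal (h x) \<le> (\<integral>\<^sup>+t. ennreal (K x t * g t) \<partial>lborel)"
    proof (cases "0 \<le> x")
      case True
      have c0: "0 \<le> 2*b*tanh x * jb x powr \<gamma>" using b True by simp
      have "ennreal (h x) = ennreal (2*b*tanh x * jb x powr \<gamma>) * ennreal \<bar>v x\<bar>"
        using True b by (simp add: h_def ennreal_mult[symmetric] abs_mult mult_ac)
      also have "\<dots> \<le> ennreal (2*b*tanh x * jb x powr \<gamma>) * (\<integral>\<^sup>+t. ennreal (indicator {x..} t * (\<bar>f t\<bar> * (hh b t / hh b x))) \<partial>lborel)"
        by (intro mult_left_mono v_bound[OF p \<gamma> H]) auto
      also have "\<dots> = (\<integral>\<^sup>+t. ennreal (2*b*tanh x * jb x powr \<gamma>) * ennreal (indicator {x..} t * (\<bar>f t\<bar> * (hh b t / hh b x))) \<partial>lborel)"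
        by (rule nn_integral_cmult[symmetric]) measurable
      also have "\<dots> = (\<integral>\<^sup>+t. ennreal (K x t * g t) \<partial>lborel)"
      proof (intro nn_integral_cong)
        fix t :: real
        show "ennreal (2*b*tanh x * jb x powr \<gamma>) * ennreal (indicator {x..} t * (\<bar>f t\<bar> * (hh b t / hh b x))) = ennreal (K x t * g t)"
        proof (cases "x \<le> t")
          case xt: True
          have KG: "K x t * g t = 2*b*tanh x * jb x powr \<gamma> * (\<bar>f t\<bar> * (hh b t / hh b x))"
            unfolding K_def g_def using True xt jb_pos[of t] by (simp add: field_simps)
          have n3: "0 \<le> \<bar>f t\<bar> * (hh b t / hh b x)" using hh_pos[of b] by (simp add: less_imp_le)
          show ?thesis unfolding KG using xt by (subst ennreal_mult[OF c0 n3]) simp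
        qed (simp add: K_def)
      qed
      finally show ?thesis .
    qed (simp add: h_def)
  qed (auto)
  moreover have "h x powr p = indicator {0..} x * \<bar>2*b*tanh x * v x * jb x powr \<gamma>\<bar> powr p" for x
    using p by (simp add: h_def indicator_def)
  moreover have "g t powr p = \<bar>f t * jb t powr \<gamma>\<bar> powr p" for t
    using jb_pos[of t] by (simp add: g_def abs_mult)
  ultimately show ?thesis by simp
qed



lemma E1_half:
  assumes p: "1 < p" and \<gamma>: "\<gamma> > 2 - 1/p" and H: "hyp p \<gamma> b u v u2 f"
  shows "(\<integral>\<^sup>+x. ennreal (indicator {0..} x * \<bar>v x * jb x powr (\<gamma>-1)\<bar> powr p) \<partial>lborel) \<le>
    ennreal (cw (\<gamma>-1) p) * ennreal (CH p (\<gamma>-1)) * ennreal (cw \<gamma> p) *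
    (\<integral>\<^sup>+t. ennreal (\<bar>f t * jb t powr \<gamma>\<bar> powr p) \<partial>lborel)"
proof -
  have b: "0 \<le> b" and fL: "in_wLp p \<gamma> f" and sd: "second_derivs u v u2" using H by (auto simp: hyp_def)
  have g1: "\<gamma> > 1" using \<gamma> p by (smt (verit) divide_less_eq_1_pos)
  have fm[measurable]: "f \<in> borel_measurable borel" using fL by (simp add: in_wLp_def)
  have vm[measurable]: "v \<in> borel_measurable borel"
    by (intro borel_measurable_continuous_onI continuous_at_imp_continuous_on ballI sd_cont[OF sd])
  have "-1/p < 0" using p by simp
  then have a: "\<gamma> - 1 > -1/p" using g1 by linarith
  have "(\<integral>\<^sup>+x. ennreal (indicator {0..} x * \<bar>v x * jb x powr (\<gamma>-1)\<bar> powr p) \<partial>lborel) \<le>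
    ennreal (cw (\<gamma>-1) p) * ennreal (CH p (\<gamma>-1)) * ennreal (cw (\<gamma>-1+1) p) *
    (\<integral>\<^sup>+x. ennreal (indicator {0..} x * \<bar>f x * jb x powr (\<gamma>-1+1)\<bar> powr p) \<partial>lborel)"
  proof (rule hardy_apply[OF p a vm fm])
    fix x :: real assume x: "0 \<le> x"
    have "ennreal \<bar>v x\<bar> \<le> (\<integral>\<^sup>+t. ennreal (indicator {x..} t * (\<bar>f t\<bar> * (hh b t / hh b x))) \<partial>lborel)"
      by (rule v_bound[OF p \<gamma> H])
    also have "\<dots> \<le> (\<integral>\<^sup>+t. ennreal (indicator {x..} t * \<bar>f t\<bar>) \<partial>lborel)"
    proof (intro nn_integral_mono ennreal_leI)
      fix t
      show "indicator {x..} t * (\<bar>f t\<bar> * (hh b t / hh b x)) \<le> indicator {x..} t * \<bar>f t\<bar>"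
      proof (cases "x \<le> t")
        case True
        have "hh b t / hh b x \<le> 1" using hh_anti[OF b x True] hh_pos[of b x] by simp
        then have "\<bar>f t\<bar> * (hh b t / hh b x) \<le> \<bar>f t\<bar>" by (rule mult_left_le) simp
        then show ?thesis using True by simp
      qed simp
    qed
    finally show "ennreal \<bar>v x\<bar> \<le> (\<integral>\<^sup>+t. ennreal (indicator {x..} t * \<bar>f t\<bar>) \<partial>lborel)" .
  qed
  also have "(\<integral>\<^sup>+x. ennreal (indicator {0..} x * \<bar>f x * jb x powr (\<gamma>-1+1)\<bar> powr p) \<partial>lborel) \<le>
             (\<integral>\<^sup>+t. ennreal (\<bar>f t * jb t powr \<gamma>\<bar> powr p) \<partial>lborel)"
    by (intro nn_integral_mono ennreal_leI) (auto simp: indicator_def)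
  finally show ?thesis by (simp add: mult_left_mono)
qed

lemma E3_half:
  assumes p: "1 < p" and \<gamma>: "\<gamma> > 2 - 1/p" and H: "hyp p \<gamma> b u v u2 f"
  shows "(\<integral>\<^sup>+x. ennreal (indicator {0..} x * \<bar>u x * jb x powr (\<gamma>-2)\<bar> powr p) \<partial>lborel) \<le>
    ennreal (cw (\<gamma>-2) p) * ennreal (CH p (\<gamma>-2)) * ennreal (cw (\<gamma>-1) p) *
    (\<integral>\<^sup>+x. ennreal (indicator {0..} x * \<bar>v x * jb x powr (\<gamma>-1)\<bar> powr p) \<partial>lborel)"
proof -
  have sd: "second_derivs u v u2" and uL: "in_wLp p (\<gamma>-2) u" and vL: "in_wLp p (\<gamma>-1) v"
    using H by (auto simp: hyp_def)
  have gp: "\<gamma> * p > 2 * p - 1" using \<gamma> p by (simp add: field_simps)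
  have vint: "integrable lborel v" using wLp_L1[OF p _ vL] gp p by (simp add: field_simps)
  have vm[measurable]: "v \<in> borel_measurable borel"
    by (intro borel_measurable_continuous_onI continuous_at_imp_continuous_on ballI sd_cont[OF sd])
  have um[measurable]: "u \<in> borel_measurable borel" using uL by (simp add: in_wLp_def)
  have a: "\<gamma> - 2 > -1/p" using gp p by (simp add: field_simps)
  have "(\<integral>\<^sup>+x. ennreal (indicator {0..} x * \<bar>u x * jb x powr (\<gamma>-2)\<bar> powr p) \<partial>lborel) \<le>
    ennreal (cw (\<gamma>-2) p) * ennreal (CH p (\<gamma>-2)) * ennreal (cw (\<gamma>-2+1) p) *
    (\<integral>\<^sup>+x. ennreal (indicator {0..} x * \<bar>v x * jb x powr (\<gamma>-2+1)\<bar> powr p) \<partial>lborel)"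
  proof (rule hardy_apply[OF p a um vm])
    fix x :: real assume x: "0 \<le> x"
    have iv: "integrable lborel (\<lambda>t. indicator {x..} t * v t)"
      using vint by (rule Bochner_Integration.integrable_bound) (auto simp: indicator_def)
    have iv2: "integrable lborel (\<lambda>t. indicator {x..} t * \<bar>v t\<bar>)"
      using vint by (rule Bochner_Integration.integrable_bound) (auto simp: indicator_def)
    have "\<bar>u x\<bar> = \<bar>\<integral>t. indicator {x..} t * v t \<partial>lborel\<bar>"
      using repr_u[OF p \<gamma> sd uL vL, of x] by simp
    also have "\<dots> \<le> (\<integral>t. indicator {x..} t * \<bar>v t\<bar> \<partial>lborel)"
      by (rule integral_abs_bound_integral[OF iv iv2]) (auto simp: indicator_def)
    finally have le: "\<bar>u x\<bar> \<le> (\<integral>t. indicator {x..} t * \<bar>v t\<bar> \<partial>lborel)" .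
    have "(\<integral>\<^sup>+t. ennreal (indicator {x..} t * \<bar>v t\<bar>) \<partial>lborel) = ennreal (\<integral>t. indicator {x..} t * \<bar>v t\<bar> \<partial>lborel)"
      by (rule nn_integral_eq_integral[OF iv2]) auto
    then show "ennreal \<bar>u x\<bar> \<le> (\<integral>\<^sup>+t. ennreal (indicator {x..} t * \<bar>v t\<bar>) \<partial>lborel)"
      using le by (simp add: ennreal_leI)
  qed
  then show ?thesis by simp
qed

lemma reflect_hyp:
  assumes H: "hyp p \<gamma> b u v u2 f"
  shows "hyp p \<gamma> b (\<lambda>x. u (-x)) (\<lambda>x. - v (-x)) (\<lambda>x. u2 (-x)) (\<lambda>x. f (-x))"
proof -
  have b: "0 \<le> b" and sd: "second_derivs u v u2" and uL: "in_wLp p (\<gamma>-2) u" and vL: "in_wLp p (\<gamma>-1) v"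
    and fL: "in_wLp p \<gamma> f" and u2m[measurable]: "u2 \<in> borel_measurable borel"
    and eq: "AE x in lborel. u2 x - 2 * b * tanh x * v x = f x"
    using H by (auto simp: hyp_def)
  have vm[measurable]: "v \<in> borel_measurable borel"
    by (intro borel_measurable_continuous_onI continuous_at_imp_continuous_on ballI sd_cont[OF sd])
  have um[measurable]: "u \<in> borel_measurable borel" using uL by (simp add: in_wLp_def)
  have fm[measurable]: "f \<in> borel_measurable borel" using fL by (simp add: in_wLp_def)
  have refl_wLp: "in_wLp p e (\<lambda>x. s * g (-x))" if g: "in_wLp p e g" and s: "\<bar>s\<bar> = 1" for e s and g :: "real \<Rightarrow> real"
  proof -
    have gm[measurable]: "g \<in> borel_measurable borel" using g by (simp add: in_wLp_def)
    have "integrable lborel (\<lambda>x. \<bar>g (0 + (-1) * x) * jb (0 + (-1) * x) powr e\<bar> powr p)"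
      using g unfolding in_wLp_def by (intro lborel_integrable_real_affine) auto
    then show ?thesis using s unfolding in_wLp_def by (simp add: abs_mult)
  qed
  have "second_derivs (\<lambda>x. u (-x)) (\<lambda>x. - v (-x)) (\<lambda>x. u2 (-x))"
    unfolding second_derivs_def
  proof (intro conjI allI impI)
    fix x :: real
    have "DERIV u (-x) :> v (-x)" using sd unfolding second_derivs_def by auto
    then show "((\<lambda>x. u (-x)) has_real_derivative - v (-x)) (at x)" by (simp add: DERIV_mirror)
  next
    fix x y :: real assume xy: "x \<le> y"
    have si: "integrable lborel (\<lambda>t. indicator {-y..-x} t * u2 t)"
      and se: "v (-x) - v (-y) = (\<integral>t. indicator {-y..-x} t * u2 t \<partial>lborel)"
      using sd_int[OF sd, of "-y" "-x"] xy by auto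
    have si': "integrable lborel (\<lambda>t. indicator {-y..-x} (0 + (-1) * t) * u2 (0 + (-1) * t))"
      by (rule lborel_integrable_real_affine[OF si]) simp
    have ind: "indicator {-y..-x} (-t) = (indicator {x..y} t :: real)" for t
      by (auto simp: indicator_def)
    show "set_integrable lborel {x..y} (\<lambda>x. u2 (-x))"
      using si' unfolding set_integrable_def by (simp add: ind)
    have "(\<integral>t. indicator {-y..-x} t * u2 t \<partial>lborel) = \<bar>-1\<bar> *\<^sub>R (\<integral>t. indicator {-y..-x} (0 + (-1) * t) * u2 (0 + (-1) * t) \<partial>lborel)"
      by (rule lborel_integral_real_affine) simp
    then have "(\<integral>t. indicator {-y..-x} t * u2 t \<partial>lborel) = (\<integral>t. indicator {x..y} t * u2 (-t) \<partial>lborel)"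
      by (simp add: ind)
    then show "- v (- y) - - v (- x) = (LINT t:{x..y}|lborel. u2 (- t))"
      using se unfolding set_lebesgue_integral_def by simp
  qed
  moreover have "AE x in lborel. u2 (-x) - 2 * b * tanh x * (- v (-x)) = f (-x)"
  proof -
    have "AE x in distr lborel borel uminus. u2 x - 2 * b * tanh x * v x = f x"
      by (subst lborel_distr_uminus) (rule eq)
    then have "AE x in lborel. u2 (-x) - 2 * b * tanh (-x) * v (-x) = f (-x)"
      by (subst (asm) AE_distr_iff) auto
    then show ?thesis by simp
  qed
  moreover have "in_wLp p (\<gamma>-2) (\<lambda>x. u (-x))" using refl_wLp[OF uL, of 1] by simp
  moreover have "in_wLp p (\<gamma>-1) (\<lambda>x. - v (-x))" using refl_wLp[OF vL, of "-1"] by simp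
  moreover have "in_wLp p \<gamma> (\<lambda>x. f (-x))" using refl_wLp[OF fL, of 1] by simp
  ultimately show ?thesis using b unfolding hyp_def by simp
qed



lemma ennreal_max0: "ennreal (max 0 x) = ennreal x"
  by (cases "0 \<le> x") (auto simp: max_def ennreal_neg)

lemma reflect_split:
  fixes Q :: "real \<Rightarrow> real"
  assumes [measurable]: "Q \<in> borel_measurable borel"
  shows "(\<integral>\<^sup>+x. ennreal (Q x) \<partial>lborel) \<le> (\<integral>\<^sup>+x. ennreal (indicator {0..} x * Q x) \<partial>lborel) + (\<integral>\<^sup>+x. ennreal (indicator {0..} x * Q (-x)) \<partial>lborel)"
proof -
  have "(\<integral>\<^sup>+x. ennreal (Q x) \<partial>lborel) \<le> (\<integral>\<^sup>+x. ennreal (Q x) * indicator {0..} x \<partial>lborel) + (\<integral>\<^sup>+x. ennreal (Q (-x)) * indicator {0..} x \<partial>lborel)"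
    by (rule nn_reflect_le) measurable
  also have "(\<lambda>x. ennreal (Q x) * indicator {0..} x) = (\<lambda>x. ennreal (indicator {0..} x * Q x))"
    by (auto simp: indicator_def fun_eq_iff)
  also have "(\<lambda>x. ennreal (Q (-x)) * indicator {0..} x) = (\<lambda>x. ennreal (indicator {0..} x * Q (-x)))"
    by (auto simp: indicator_def fun_eq_iff)
  finally show ?thesis .
qed

lemma sum_powr_le:
  fixes a c p :: real assumes "0 \<le> a" "0 \<le> c" "0 < p"
  shows "(a + c) powr p \<le> 2 powr p * (a powr p + c powr p)"
proof -
  have "(a + c) powr p \<le> (2 * max a c) powr p" using assms by (intro powr_mono2) auto
  also have "\<dots> = 2 powr p * max a c powr p" using assms by (simp add: powr_mult)
  also have "max a c powr p \<le> a powr p + c powr p" using assms by (auto simp: max_def)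
  finally show ?thesis by simp
qed

lemma reflect_N:
  fixes g :: "real \<Rightarrow> real"
  assumes [measurable]: "g \<in> borel_measurable borel"
  shows "(\<integral>\<^sup>+t. ennreal (\<bar>g (-t) * jb t powr e\<bar> powr p) \<partial>lborel) = (\<integral>\<^sup>+t. ennreal (\<bar>g t * jb t powr e\<bar> powr p) \<partial>lborel)"
  by (subst nn_integral_real_affine[where c="-1" and t=0, of "\<lambda>t. ennreal (\<bar>g (-t) * jb t powr e\<bar> powr p)"]) auto



theorem lemma3p5:
  fixes p \<gamma> :: real
  assumes "1 < p" and "\<gamma> > 2 - 1 / p"
  shows "\<exists>C::real. \<forall>b::real. \<forall>u u1 u2 f :: real \<Rightarrow> real.
           b \<ge> 0 \<longrightarrow> in_D p \<gamma> u u1 u2 \<longrightarrow> in_wLp p \<gamma> f \<longrightarrow>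
           (AE x in lborel. u2 x - 2 * b * tanh x * u1 x = f x) \<longrightarrow>
           M2_norm p (\<gamma> - 2) u u1 u2 \<le> C * wLp_norm p \<gamma> f"
proof -
  note p = assms(1) and \<gamma> = assms(2)
  define A1 where "A1 = cw (\<gamma>-1) p * max 0 (CH p (\<gamma>-1)) * cw \<gamma> p"
  define A3 where "A3 = cw (\<gamma>-2) p * max 0 (CH p (\<gamma>-2)) * cw (\<gamma>-1) p"
  define K where "K = 2 * A3 * A1 + 2 * A1 + 3 * 2 powr p"
  have A1: "0 \<le> A1" unfolding A1_def cw_def by simp
  have A3: "0 \<le> A3" unfolding A3_def cw_def by simp
  have K0: "0 \<le> K" unfolding K_def using A1 A3 by simp
  have e1: "\<gamma> - 2 + 1 = \<gamma> - 1" and e2: "\<gamma> - 2 + 2 = \<gamma>" by simp_all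
  show ?thesis
  proof (intro exI[of _ "K powr (1/p)"] allI impI)
    fix b :: real and u u1 u2 f :: "real \<Rightarrow> real"
    assume b: "0 \<le> b" and D: "in_D p \<gamma> u u1 u2" and fL: "in_wLp p \<gamma> f"
      and eq: "AE x in lborel. u2 x - 2 * b * tanh x * u1 x = f x"
    have sd: "second_derivs u u1 u2" and uL: "in_wLp p (\<gamma>-2) u" and vL: "in_wLp p (\<gamma>-1) u1"
      and u2L: "in_wLp p \<gamma> u2"
      using D unfolding in_D_def in_M2_def e1 e2 by auto
    have u2m[measurable]: "u2 \<in> borel_measurable borel" using u2L by (simp add: in_wLp_def)
    have fm[measurable]: "f \<in> borel_measurable borel" using fL by (simp add: in_wLp_def)
    have um[measurable]: "u \<in> borel_measurable borel" using uL by (simp add: in_wLp_def)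
    have vm[measurable]: "u1 \<in> borel_measurable borel"
      by (intro borel_measurable_continuous_onI continuous_at_imp_continuous_on ballI sd_cont[OF sd])
    have H: "hyp p \<gamma> b u u1 u2 f" unfolding hyp_def using b sd uL vL fL u2m eq by auto
    have HR: "hyp p \<gamma> b (\<lambda>x. u (-x)) (\<lambda>x. - u1 (-x)) (\<lambda>x. u2 (-x)) (\<lambda>x. f (-x))"
      by (rule reflect_hyp[OF H])
    define N where "N = (\<integral>\<^sup>+t. ennreal (\<bar>f t * jb t powr \<gamma>\<bar> powr p) \<partial>lborel)"
    have NR: "(\<integral>\<^sup>+t. ennreal (\<bar>f (-t) * jb t powr \<gamma>\<bar> powr p) \<partial>lborel) = N"
      unfolding N_def by (rule reflect_N) simp
    have cA1: "ennreal (cw (\<gamma>-1) p) * ennreal (CH p (\<gamma>-1)) * ennreal (cw \<gamma> p) = ennreal A1"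
    proof -
      have m: "ennreal (CH p (\<gamma>-1)) = ennreal (max 0 (CH p (\<gamma>-1)))" by (rule ennreal_max0[symmetric])
      show ?thesis unfolding m A1_def cw_def by (simp add: ennreal_mult)
    qed
    have cA3: "ennreal (cw (\<gamma>-2) p) * ennreal (CH p (\<gamma>-2)) * ennreal (cw (\<gamma>-1) p) = ennreal A3"
    proof -
      have m: "ennreal (CH p (\<gamma>-2)) = ennreal (max 0 (CH p (\<gamma>-2)))" by (rule ennreal_max0[symmetric])
      show ?thesis unfolding m A3_def cw_def by (simp add: ennreal_mult)
    qed
    define V where "V = (\<integral>\<^sup>+x. ennreal (indicator {0..} x * \<bar>u1 x * jb x powr (\<gamma>-1)\<bar> powr p) \<partial>lborel)"
    define VR where "VR = (\<integral>\<^sup>+x. ennreal (indicator {0..} x * \<bar>u1 (-x) * jb (-x) powr (\<gamma>-1)\<bar> powr p) \<partial>lborel)"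
    have V: "V \<le> ennreal A1 * N" unfolding V_def N_def cA1[symmetric] by (rule E1_half[OF p \<gamma> H])
    have VR: "VR \<le> ennreal A1 * N"
      using E1_half[OF p \<gamma> HR] unfolding VR_def cA1 NR by simp
    have Ev: "(\<integral>\<^sup>+x. ennreal (\<bar>u1 x * jb x powr (\<gamma>-1)\<bar> powr p) \<partial>lborel) \<le> ennreal (2 * A1) * N"
    proof -
      have "(\<integral>\<^sup>+x. ennreal (\<bar>u1 x * jb x powr (\<gamma>-1)\<bar> powr p) \<partial>lborel) \<le> V + VR"
        unfolding V_def VR_def by (rule reflect_split) measurable
      also have "\<dots> \<le> ennreal A1 * N + ennreal A1 * N" by (intro add_mono V VR)
      also have "\<dots> = ennreal (2 * A1) * N"
      proof -
        have "ennreal (2 * A1) = ennreal A1 + ennreal A1" using A1 by (subst ennreal_plus[symmetric]) auto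
        then show ?thesis by (simp only: distrib_right)
      qed
      finally show ?thesis .
    qed
    have Eu: "(\<integral>\<^sup>+x. ennreal (\<bar>u x * jb x powr (\<gamma>-2)\<bar> powr p) \<partial>lborel) \<le> ennreal (2 * A3 * A1) * N"
    proof -
      have "(\<integral>\<^sup>+x. ennreal (\<bar>u x * jb x powr (\<gamma>-2)\<bar> powr p) \<partial>lborel) \<le>
           (\<integral>\<^sup>+x. ennreal (indicator {0..} x * \<bar>u x * jb x powr (\<gamma>-2)\<bar> powr p) \<partial>lborel) +
           (\<integral>\<^sup>+x. ennreal (indicator {0..} x * \<bar>u (-x) * jb (-x) powr (\<gamma>-2)\<bar> powr p) \<partial>lborel)"
        by (rule reflect_split) measurable
      also have "\<dots> \<le> ennreal A3 * V + ennreal A3 * VR"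
      proof (intro add_mono)
        show "(\<integral>\<^sup>+x. ennreal (indicator {0..} x * \<bar>u x * jb x powr (\<gamma>-2)\<bar> powr p) \<partial>lborel) \<le> ennreal A3 * V"
          unfolding V_def cA3[symmetric] by (rule E3_half[OF p \<gamma> H])
        show "(\<integral>\<^sup>+x. ennreal (indicator {0..} x * \<bar>u (-x) * jb (-x) powr (\<gamma>-2)\<bar> powr p) \<partial>lborel) \<le> ennreal A3 * VR"
          using E3_half[OF p \<gamma> HR] unfolding VR_def cA3 by simp
      qed
      also have "\<dots> \<le> ennreal A3 * (ennreal A1 * N) + ennreal A3 * (ennreal A1 * N)"
        by (intro add_mono mult_left_mono V VR) auto
      also have "\<dots> = ennreal (2 * A3 * A1) * N"
      proof -
        have q1: "2*A3*A1 = A3*A1 + A3*A1" by simp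
        have q2: "ennreal (A3*A1) = ennreal A3 * ennreal A1" by (rule ennreal_mult) (use A1 A3 in auto)
        have "ennreal (2*A3*A1) = ennreal (A3*A1) + ennreal (A3*A1)" unfolding q1 using A1 A3 by (intro ennreal_plus) auto
        then show ?thesis unfolding q2 by (simp only: distrib_right mult.assoc)
      qed
      finally show ?thesis .
    qed
    have E2: "(\<integral>\<^sup>+x. ennreal (\<bar>2*b*tanh x * u1 x * jb x powr \<gamma>\<bar> powr p) \<partial>lborel) \<le> ennreal 2 * N"
    proof -
      have "(\<integral>\<^sup>+x. ennreal (\<bar>2*b*tanh x * u1 x * jb x powr \<gamma>\<bar> powr p) \<partial>lborel) \<le>
           (\<integral>\<^sup>+x. ennreal (indicator {0..} x * \<bar>2*b*tanh x * u1 x * jb x powr \<gamma>\<bar> powr p) \<partial>lborel) +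
           (\<integral>\<^sup>+x. ennreal (indicator {0..} x * \<bar>2*b*tanh (-x) * u1 (-x) * jb (-x) powr \<gamma>\<bar> powr p) \<partial>lborel)"
        by (rule reflect_split) measurable
      also have "\<dots> \<le> N + N"
      proof (intro add_mono)
        show "(\<integral>\<^sup>+x. ennreal (indicator {0..} x * \<bar>2*b*tanh x * u1 x * jb x powr \<gamma>\<bar> powr p) \<partial>lborel) \<le> N"
          unfolding N_def by (rule E2_half[OF p \<gamma> H])
        show "(\<integral>\<^sup>+x. ennreal (indicator {0..} x * \<bar>2*b*tanh (-x) * u1 (-x) * jb (-x) powr \<gamma>\<bar> powr p) \<partial>lborel) \<le> N"
          using E2_half[OF p \<gamma> HR] unfolding NR by (simp add: abs_mult)
      qed
      also have "N + N = ennreal 2 * N" by (simp only: ennreal_numeral mult_2)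
      finally show ?thesis .
    qed
    have Eu2: "(\<integral>\<^sup>+x. ennreal (\<bar>u2 x * jb x powr \<gamma>\<bar> powr p) \<partial>lborel) \<le> ennreal (3 * 2 powr p) * N"
    proof -
      have "(\<integral>\<^sup>+x. ennreal (\<bar>u2 x * jb x powr \<gamma>\<bar> powr p) \<partial>lborel) \<le>
            (\<integral>\<^sup>+x. ennreal (2 powr p) * (ennreal (\<bar>f x * jb x powr \<gamma>\<bar> powr p) + ennreal (\<bar>2*b*tanh x * u1 x * jb x powr \<gamma>\<bar> powr p)) \<partial>lborel)"
      proof (rule nn_integral_mono_AE)
        show "AE x in lborel. ennreal (\<bar>u2 x * jb x powr \<gamma>\<bar> powr p) \<le> ennreal (2 powr p) * (ennreal (\<bar>f x * jb x powr \<gamma>\<bar> powr p) + ennreal (\<bar>2*b*tanh x * u1 x * jb x powr \<gamma>\<bar> powr p))"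
          using eq
        proof eventually_elim
          case (elim x)
          have "u2 x * jb x powr \<gamma> = f x * jb x powr \<gamma> + 2*b*tanh x * u1 x * jb x powr \<gamma>"
            using elim by (simp add: algebra_simps)
          then have "\<bar>u2 x * jb x powr \<gamma>\<bar> \<le> \<bar>f x * jb x powr \<gamma>\<bar> + \<bar>2*b*tanh x * u1 x * jb x powr \<gamma>\<bar>"
            by (metis abs_triangle_ineq)
          then have "\<bar>u2 x * jb x powr \<gamma>\<bar> powr p \<le> (\<bar>f x * jb x powr \<gamma>\<bar> + \<bar>2*b*tanh x * u1 x * jb x powr \<gamma>\<bar>) powr p"
            using p by (intro powr_mono2) auto
          also have "\<dots> \<le> 2 powr p * (\<bar>f x * jb x powr \<gamma>\<bar> powr p + \<bar>2*b*tanh x * u1 x * jb x powr \<gamma>\<bar> powr p)"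
            using p by (intro sum_powr_le) auto
          finally have R: "\<bar>u2 x * jb x powr \<gamma>\<bar> powr p \<le> 2 powr p * (\<bar>f x * jb x powr \<gamma>\<bar> powr p + \<bar>2*b*tanh x * u1 x * jb x powr \<gamma>\<bar> powr p)" .
          have EQ: "ennreal (2 powr p) * (ennreal (\<bar>f x * jb x powr \<gamma>\<bar> powr p) + ennreal (\<bar>2*b*tanh x * u1 x * jb x powr \<gamma>\<bar> powr p)) =
                ennreal (2 powr p * (\<bar>f x * jb x powr \<gamma>\<bar> powr p + \<bar>2*b*tanh x * u1 x * jb x powr \<gamma>\<bar> powr p))"
            by (simp add: ennreal_mult ennreal_plus)
          show ?case unfolding EQ using R by (rule ennreal_leI)
        qed
      qed
      also have "\<dots> = ennreal (2 powr p) * (N + (\<integral>\<^sup>+x. ennreal (\<bar>2*b*tanh x * u1 x * jb x powr \<gamma>\<bar> powr p) \<partial>lborel))"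
        unfolding N_def by (subst nn_integral_cmult) (auto simp: nn_integral_add)
      also have "\<dots> \<le> ennreal (2 powr p) * (N + ennreal 2 * N)"
        by (intro mult_left_mono add_left_mono E2) auto
      also have "\<dots> = ennreal (3 * 2 powr p) * N"
      proof -
        have e3: "ennreal (3 * 2 powr p) = ennreal (2 powr p) * 3" by (simp add: ennreal_mult mult.commute)
        have n3: "(3::ennreal) = 1 + 2" by simp
        have "N + ennreal 2 * N = 3 * N" by (simp only: n3 distrib_right mult_1 ennreal_numeral)
        then show ?thesis by (simp only: e3 mult.assoc)
      qed
      finally show ?thesis .
    qed
    define Iu where "Iu = (\<integral>x. \<bar>u x * jb x powr (\<gamma>-2)\<bar> powr p \<partial>lborel)"
    define Iv where "Iv = (\<integral>x. \<bar>u1 x * jb x powr (\<gamma>-1)\<bar> powr p \<partial>lborel)"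
    define Iu2 where "Iu2 = (\<integral>x. \<bar>u2 x * jb x powr \<gamma>\<bar> powr p \<partial>lborel)"
    define If where "If = (\<integral>x. \<bar>f x * jb x powr \<gamma>\<bar> powr p \<partial>lborel)"
    have cIu: "ennreal Iu = (\<integral>\<^sup>+x. ennreal (\<bar>u x * jb x powr (\<gamma>-2)\<bar> powr p) \<partial>lborel)"
      unfolding Iu_def using uL unfolding in_wLp_def by (intro nn_integral_eq_integral[symmetric]) auto
    have cIv: "ennreal Iv = (\<integral>\<^sup>+x. ennreal (\<bar>u1 x * jb x powr (\<gamma>-1)\<bar> powr p) \<partial>lborel)"
      unfolding Iv_def using vL unfolding in_wLp_def by (intro nn_integral_eq_integral[symmetric]) auto
    have cIu2: "ennreal Iu2 = (\<integral>\<^sup>+x. ennreal (\<bar>u2 x * jb x powr \<gamma>\<bar> powr p) \<partial>lborel)"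
      unfolding Iu2_def using u2L unfolding in_wLp_def by (intro nn_integral_eq_integral[symmetric]) auto
    have cIf: "ennreal If = N"
      unfolding If_def N_def using fL unfolding in_wLp_def by (intro nn_integral_eq_integral[symmetric]) auto
    have nn: "0 \<le> Iu" "0 \<le> Iv" "0 \<le> Iu2" "0 \<le> If"
      unfolding Iu_def Iv_def Iu2_def If_def by auto
    have "ennreal (Iu + Iv + Iu2) = ennreal Iu + ennreal Iv + ennreal Iu2" using nn by (simp add: ennreal_plus)
    also have "\<dots> \<le> ennreal (2 * A3 * A1) * N + ennreal (2 * A1) * N + ennreal (3 * 2 powr p) * N"
      unfolding cIu cIv cIu2 by (intro add_mono Eu Ev Eu2)
    also have "\<dots> = ennreal (K * If)"
    proof -
      have k: "K * If = 2*A3*A1*If + 2*A1*If + 3 * 2 powr p * If" unfolding K_def by (simp add: algebra_simps)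
      have "ennreal (K * If) = ennreal (2*A3*A1) * ennreal If + ennreal (2*A1) * ennreal If + ennreal (3 * 2 powr p) * ennreal If"
        unfolding k using A1 A3 nn by (simp add: ennreal_plus ennreal_mult)
      then show ?thesis unfolding cIf by simp
    qed
    finally have S: "Iu + Iv + Iu2 \<le> K * If"
      using K0 nn by (subst (asm) ennreal_le_iff) auto
    have "M2_norm p (\<gamma> - 2) u u1 u2 = (Iu + Iv + Iu2) powr (1/p)"
      unfolding M2_norm_def Iu_def Iv_def Iu2_def e1 e2 ..
    also have "\<dots> \<le> (K * If) powr (1/p)" using S nn p by (intro powr_mono2) auto
    also have "\<dots> = K powr (1/p) * wLp_norm p \<gamma> f"
      unfolding wLp_norm_def If_def[symmetric] using K0 nn by (simp add: powr_mult)
    finally show "M2_norm p (\<gamma> - 2) u u1 u2 \<le> K powr (1/p) * wLp_norm p \<gamma> f" .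
  qed
qed


end
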